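(* Let $(\Gamma,\boldsymbol{\ell})$ be a metric graph. If there exists one non-zero eigenvalue of $(\Gamma,\boldsymbol{\ell})$ which is simple and whose eigenfunction has full support, then there are infinitely many simple eigenvalues of $(\Gamma,\boldsymbol{\ell})$ whose eigenfunctions have full support.
   Context: $\Gamma$ is a finite graph with edges $e_1,\dots,e_N$; $(\Gamma,\boldsymbol{\ell})$, $\boldsymbol{\ell}\in\mathbb{R}_+^N$, identifies $e_j$ with $[0,\ell_j]$ and carries the Laplacian $f\mapsto -f''$ edgewise with standard (Kirchhoff) vertex conditions: continuity at each vertex and vanishing sum of outgoing derivatives at each vertex. An eigenvalue is simple if its eigenspace is one-dimensional. An eigenfunction $f$ has full support if $f|_{e_j}\not\equiv0$ for every $j=1,\dots,N$. *)

theory Defs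
  imports "HOL-Analysis.Analysis"
begin

text \<open>A finite (multi)graph with edges indexed by 0..<N; edge j goes from vertex
  src j (identified with the point 0 of [0, l j]) to vertex tgt j (identified with
  the point l j).  A function on the metric graph is a family f of functions,
  f j being the restriction to edge j, considered on {0..l j}.\<close>

definition kirchhoff_eigenfunction ::
  "nat \<Rightarrow> (nat \<Rightarrow> 'v) \<Rightarrow> (nat \<Rightarrow> 'v) \<Rightarrow> (nat \<Rightarrow> real) \<Rightarrow> real \<Rightarrow> (nat \<Rightarrow> real \<Rightarrow> real) \<Rightarrow> bool"
where
  "kirchhoff_eigenfunction N src tgt l lam f \<longleftrightarrow>
     (\<exists>f' f''.
        (\<forall>j<N. \<forall>x\<in>{0..l j}.
            (f j has_real_derivative f' j x) (at x within {0..l j}) \<and>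
            (f' j has_real_derivative f'' j x) (at x within {0..l j}) \<and>
            - f'' j x = lam * f j x) \<and>
        \<comment> \<open>continuity at every vertex\<close>
        (\<forall>j<N. \<forall>k<N.
            (src j = src k \<longrightarrow> f j 0 = f k 0) \<and>
            (src j = tgt k \<longrightarrow> f j 0 = f k (l k)) \<and>
            (tgt j = tgt k \<longrightarrow> f j (l j) = f k (l k))) \<and>
        \<comment> \<open>sum of outgoing derivatives vanishes at every vertex\<close>
        (\<forall>v. (\<Sum>j\<in>{j. j < N \<and> src j = v}. f' j 0)
              + (\<Sum>j\<in>{j. j < N \<and> tgt j = v}. - f' j (l j)) = 0))"

definition graph_fun_nonzero :: "nat \<Rightarrow> (nat \<Rightarrow> real) \<Rightarrow> (nat \<Rightarrow> real \<Rightarrow> real) \<Rightarrow> bool" where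
  "graph_fun_nonzero N l f \<longleftrightarrow> (\<exists>j<N. \<exists>x\<in>{0..l j}. f j x \<noteq> 0)"

definition full_support :: "nat \<Rightarrow> (nat \<Rightarrow> real) \<Rightarrow> (nat \<Rightarrow> real \<Rightarrow> real) \<Rightarrow> bool" where
  "full_support N l f \<longleftrightarrow> (\<forall>j<N. \<exists>x\<in>{0..l j}. f j x \<noteq> 0)"

definition is_eigenvalue where
  "is_eigenvalue N src tgt l lam \<longleftrightarrow>
     (\<exists>f. kirchhoff_eigenfunction N src tgt l lam f \<and> graph_fun_nonzero N l f)"

definition simple_eigenvalue where
  "simple_eigenvalue N src tgt l lam \<longleftrightarrow>
     (\<exists>\<phi>. kirchhoff_eigenfunction N src tgt l lam \<phi> \<and> graph_fun_nonzero N l \<phi> \<and>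
        (\<forall>g. kirchhoff_eigenfunction N src tgt l lam g \<longrightarrow>
           (\<exists>c. \<forall>j<N. \<forall>x\<in>{0..l j}. g j x = c * \<phi> j x)))"

end

theory Submission
  imports Defs "Jordan_Normal_Form.Determinant" "HOL-Analysis.Kronecker_Approximation_Theorem"
begin

lemma ode_rep:
  fixes f f' f'' :: "real \<Rightarrow> real" and s L lam :: real
  assumes s: "s > 0" and lam: "lam = s^2"
    and D: "\<forall>x\<in>{0..L}. (f has_real_derivative f' x) (at x within {0..L}) \<and>
            (f' has_real_derivative f'' x) (at x within {0..L}) \<and> - f'' x = lam * f x"
  shows "\<forall>x\<in>{0..L}. f x = f 0 * cos (s*x) + f' 0 / s * sin (s*x) \<and>
            f' x = - s * f 0 * sin (s*x) + f' 0 * cos (s*x)"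
proof -
  define a where "a = f 0"
  define b where "b = f' 0 / s"
  define g where "g x = f x - (a * cos (s*x) + b * sin (s*x))" for x
  define h where "h x = f' x - (- a * s * sin (s*x) + b * s * cos (s*x))" for x
  define E where "E x = (h x)^2 + s^2 * (g x)^2" for x
  have dE: "(E has_real_derivative 0) (at x within {0..L})" if x: "x \<in> {0..L}" for x
  proof -
    have d1: "(f has_real_derivative f' x) (at x within {0..L})" and d2: "(f' has_real_derivative f'' x) (at x within {0..L})"
      and e: "- f'' x = lam * f x" using D x by auto
    have dg: "(g has_real_derivative h x) (at x within {0..L})"
      unfolding g_def h_def
      by (rule derivative_eq_intros d1 | simp)+
    have dh: "(h has_real_derivative (-(s^2) * g x)) (at x within {0..L})"
    proof -
      have "(h has_real_derivative f'' x - (- a * s * (cos (s*x) * s) + b * s * (- sin (s*x) * s))) (at x within {0..L})"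
        unfolding h_def by (rule derivative_eq_intros d2 | simp)+
      moreover have "f'' x - (- a * s * (cos (s*x) * s) + b * s * (- sin (s*x) * s)) = -(s^2) * g x"
        using e unfolding lam g_def by (simp add: algebra_simps power2_eq_square)
      ultimately show ?thesis by simp
    qed
    have "(E has_real_derivative 2 * h x * (-(s^2) * g x) + s^2 * (2 * g x * h x)) (at x within {0..L})"
      unfolding E_def by (rule derivative_eq_intros dg dh | simp)+
    then show ?thesis by (simp add: algebra_simps)
  qed
  obtain c where c: "\<forall>x\<in>{0..L}. E x = c"
    using has_field_derivative_zero_constant[of "{0..L}" E] dE by auto
  show ?thesis
  proof
    fix x assume x: "x \<in> {0..L}"
    have "0 \<in> {0..L}" using x by auto
    then have "E x = E 0" using c x by auto
    also have "E 0 = 0" unfolding E_def g_def h_def a_def b_def using s by simp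
    finally have "(h x)^2 + s^2 * (g x)^2 = 0" unfolding E_def .
    moreover have "(h x)^2 \<ge> 0" "s^2 * (g x)^2 \<ge> 0" by auto
    ultimately have "h x = 0" "g x = 0" using s by (auto simp: add_nonneg_eq_0_iff)
    then show "f x = f 0 * cos (s*x) + f' 0 / s * sin (s*x) \<and>
            f' x = - s * f 0 * sin (s*x) + f' 0 * cos (s*x)"
      unfolding g_def h_def a_def b_def using s by (auto simp: field_simps)
  qed
qed

lemma vertex_sum:
  fixes A B D E :: "nat \<Rightarrow> real" and src tgt :: "nat \<Rightarrow> 'v"
  assumes cont: "\<forall>j<N. \<forall>k<N. (src j = src k \<longrightarrow> A j = A k) \<and> (src j = tgt k \<longrightarrow> A j = B k) \<and> (tgt j = tgt k \<longrightarrow> B j = B k)"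
    and kir: "\<forall>v. (\<Sum>j\<in>{j. j < N \<and> src j = v}. D j) + (\<Sum>j\<in>{j. j < N \<and> tgt j = v}. E j) = 0"
  shows "(\<Sum>j<N. A j * D j + B j * E j) = 0"
proof -
  define V where "V = src ` {..<N} \<union> tgt ` {..<N}"
  define \<phi> where "\<phi> v = (if \<exists>j<N. src j = v then A (SOME j. j<N \<and> src j = v) else B (SOME j. j<N \<and> tgt j = v))" for v
  have phs: "\<phi> (src j) = A j" if "j < N" for j
  proof -
    have "\<exists>k. k<N \<and> src k = src j" using that by auto
    then have "(SOME k. k<N \<and> src k = src j) < N \<and> src (SOME k. k<N \<and> src k = src j) = src j" by (rule someI_ex)
    moreover have "\<phi> (src j) = A (SOME k. k<N \<and> src k = src j)" unfolding \<phi>_def using that by auto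
    ultimately show ?thesis using cont that by metis
  qed
  have pht: "\<phi> (tgt j) = B j" if "j < N" for j
  proof (cases "\<exists>k<N. src k = tgt j")
    case True
    then have "\<exists>k. k<N \<and> src k = tgt j" by auto
    then have "(SOME k. k<N \<and> src k = tgt j) < N \<and> src (SOME k. k<N \<and> src k = tgt j) = tgt j" by (rule someI_ex)
    moreover have "\<phi> (tgt j) = A (SOME k. k<N \<and> src k = tgt j)" unfolding \<phi>_def using True by auto
    ultimately show ?thesis using cont that by metis
  next
    case False
    have "\<exists>k. k<N \<and> tgt k = tgt j" using that by auto
    then have "(SOME k. k<N \<and> tgt k = tgt j) < N \<and> tgt (SOME k. k<N \<and> tgt k = tgt j) = tgt j" by (rule someI_ex)
    moreover have "\<phi> (tgt j) = B (SOME k. k<N \<and> tgt k = tgt j)" unfolding \<phi>_def using False by auto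
    ultimately show ?thesis using cont that by metis
  qed
  have fin: "finite V" unfolding V_def by auto
  have s1: "(\<Sum>j<N. A j * D j) = (\<Sum>v\<in>V. \<phi> v * (\<Sum>j\<in>{j. j < N \<and> src j = v}. D j))"
  proof -
    have "(\<Sum>j<N. A j * D j) = (\<Sum>j<N. \<phi> (src j) * D j)" using phs by auto
    also have "\<dots> = (\<Sum>v\<in>V. \<Sum>j\<in>{x\<in>{..<N}. src x = v}. \<phi> (src j) * D j)"
      by (rule sum.group[symmetric]) (auto simp: V_def fin)
    also have "\<dots> = (\<Sum>v\<in>V. \<phi> v * (\<Sum>j\<in>{j. j < N \<and> src j = v}. D j))"
      by (auto simp: sum_distrib_left intro!: sum.cong)
    finally show ?thesis .
  qed
  have s2: "(\<Sum>j<N. B j * E j) = (\<Sum>v\<in>V. \<phi> v * (\<Sum>j\<in>{j. j < N \<and> tgt j = v}. E j))"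
  proof -
    have "(\<Sum>j<N. B j * E j) = (\<Sum>j<N. \<phi> (tgt j) * E j)" using pht by auto
    also have "\<dots> = (\<Sum>v\<in>V. \<Sum>j\<in>{x\<in>{..<N}. tgt x = v}. \<phi> (tgt j) * E j)"
      by (rule sum.group[symmetric]) (auto simp: V_def fin)
    also have "\<dots> = (\<Sum>v\<in>V. \<phi> v * (\<Sum>j\<in>{j. j < N \<and> tgt j = v}. E j))"
      by (auto simp: sum_distrib_left intro!: sum.cong)
    finally show ?thesis .
  qed
  have "(\<Sum>j<N. A j * D j + B j * E j) = (\<Sum>v\<in>V. \<phi> v * ((\<Sum>j\<in>{j. j < N \<and> src j = v}. D j) + (\<Sum>j\<in>{j. j < N \<and> tgt j = v}. E j)))"
    unfolding sum.distrib s1 s2 by (simp add: distrib_left sum.distrib)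
  also have "\<dots> = 0" using kir by simp
  finally show ?thesis .
qed

lemma eig_not_neg:
  assumes lpos: "\<forall>j<N. l j > 0"
    and ef: "kirchhoff_eigenfunction N src tgt l lam f"
    and nz: "graph_fun_nonzero N l f"
    and neg: "lam < 0"
  shows False
proof -
  obtain f' f'' where D: "\<forall>j<N. \<forall>x\<in>{0..l j}.
            (f j has_real_derivative f' j x) (at x within {0..l j}) \<and>
            (f' j has_real_derivative f'' j x) (at x within {0..l j}) \<and>
            - f'' j x = lam * f j x"
    and C: "\<forall>j<N. \<forall>k<N.
            (src j = src k \<longrightarrow> f j 0 = f k 0) \<and>
            (src j = tgt k \<longrightarrow> f j 0 = f k (l k)) \<and>
            (tgt j = tgt k \<longrightarrow> f j (l j) = f k (l k))"
    and K: "\<forall>v. (\<Sum>j\<in>{j. j < N \<and> src j = v}. f' j 0)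
              + (\<Sum>j\<in>{j. j < N \<and> tgt j = v}. - f' j (l j)) = 0"
    using ef unfolding kirchhoff_eigenfunction_def by blast
  define F where "F j x = f j x * f' j x" for j x
  have dF: "(F j has_real_derivative (f' j x * f' j x - lam * (f j x)^2)) (at x within {0..l j})"
    if j: "j < N" and x: "x \<in> {0..l j}" for j x
  proof -
    have d1: "(f j has_real_derivative f' j x) (at x within {0..l j})"
      and d2: "(f' j has_real_derivative f'' j x) (at x within {0..l j})"
      and e: "- f'' j x = lam * f j x" using D j x by auto
    have "(F j has_real_derivative (f' j x * f' j x + f j x * f'' j x)) (at x within {0..l j})"
      unfolding F_def by (rule derivative_eq_intros d1 d2 | simp)+
    moreover have "f' j x * f' j x + f j x * f'' j x = f' j x * f' j x - lam * (f j x)^2"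
      proof -
      have "f'' j x = - lam * f j x" using e by linarith
      then show ?thesis by (simp add: power2_eq_square)
    qed
    ultimately show ?thesis by simp
  qed
  have dpos: "f' j x * f' j x - lam * (f j x)^2 \<ge> 0" for j x
  proof -
    have "lam * (f j x)^2 \<le> 0" using neg by (simp add: mult_nonpos_nonneg)
    moreover have "f' j x * f' j x \<ge> 0" by simp
    ultimately show ?thesis by linarith
  qed
  have cont: "continuous_on {0..l j} (F j)" if "j < N" for j
    by (rule DERIV_continuous_on[where D="\<lambda>x. f' j x * f' j x - lam * (f j x)^2"]) (use dF that in auto)
  have mono: "F j a \<le> F j b" if j: "j < N" and ab: "0 \<le> a" "a \<le> b" "b \<le> l j" for j a b
  proof (rule DERIV_nonneg_imp_increasing_open[OF ab(2)])
    fix x assume x: "a < x" "x < b"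
    have "(F j has_real_derivative (f' j x * f' j x - lam * (f j x)^2)) (at x within {0..l j})"
      using dF[OF j] x ab by auto
    moreover have "at x within {0..l j} = at x" using x ab by (intro at_within_Icc_at) auto
    ultimately show "\<exists>y. (F j has_real_derivative y) (at x) \<and> 0 \<le> y" using dpos by auto
  next
    show "continuous_on {a..b} (F j)" using cont[OF j] by (rule continuous_on_subset) (use ab in auto)
  qed
  have "(\<Sum>j<N. f j 0 * f' j 0 + f j (l j) * (- f' j (l j))) = 0"
  proof (rule vertex_sum[where src=src and tgt=tgt])
    show "\<forall>j<N. \<forall>k<N. (src j = src k \<longrightarrow> f j 0 = f k 0) \<and> (src j = tgt k \<longrightarrow> f j 0 = f k (l k)) \<and> (tgt j = tgt k \<longrightarrow> f j (l j) = f k (l k))"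
      by (rule C)
    show "\<forall>v. (\<Sum>j\<in>{j. j < N \<and> src j = v}. f' j 0) + (\<Sum>j\<in>{j. j < N \<and> tgt j = v}. - f' j (l j)) = 0"
      by (rule K)
  qed
  moreover have "(\<Sum>j<N. f j 0 * f' j 0 + f j (l j) * (- f' j (l j))) = (\<Sum>j<N. F j 0) - (\<Sum>j<N. F j (l j))"
    unfolding F_def by (simp add: sum_subtractf)
  ultimately have "(\<Sum>j<N. F j (l j) - F j 0) = 0" by (simp add: sum_subtractf)
  moreover have "\<forall>j\<in>{..<N}. F j (l j) - F j 0 \<ge> 0" using mono lpos by (auto intro: less_imp_le)
  ultimately have eqF: "\<forall>j\<in>{..<N}. F j (l j) - F j 0 = 0"
    using sum_nonneg_eq_0_iff[of "{..<N}" "\<lambda>j. F j (l j) - F j 0"] by blast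
  obtain j x where j: "j < N" and x: "x \<in> {0..l j}" and fx: "f j x \<noteq> 0" using nz unfolding graph_fun_nonzero_def by auto
  have Fc: "F j y = F j 0" if "y \<in> {0..l j}" for y
  proof -
    have "F j 0 \<le> F j y" using mono[OF j, of 0 y] that by auto
    moreover have "F j y \<le> F j (l j)" using mono[OF j, of y "l j"] that by auto
    moreover have "F j (l j) = F j 0" using eqF j by auto
    ultimately show ?thesis by linarith
  qed
  have "((\<lambda>_. F j 0) has_real_derivative 0) (at x within {0..l j})" by simp
  then have "(F j has_real_derivative 0) (at x within {0..l j})"
  proof (rule has_field_derivative_transform_within[where d="1::real"])
    show "0 < (1::real)" by simp
    show "x \<in> {0..l j}" by (rule x)
    show "\<And>y. y \<in> {0..l j} \<Longrightarrow> dist y x < 1 \<Longrightarrow> F j 0 = F j y" using Fc by metis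
  qed
  then have v1: "(F j has_vector_derivative 0) (at x within cbox 0 (l j))"
    by (simp add: has_real_derivative_iff_has_vector_derivative cbox_interval)
  have v2: "(F j has_vector_derivative (f' j x * f' j x - lam * (f j x)^2)) (at x within cbox 0 (l j))"
    using dF[OF j x] by (simp add: has_real_derivative_iff_has_vector_derivative cbox_interval)
  have "0 = f' j x * f' j x - lam * (f j x)^2"
    by (rule vector_derivative_unique_within_closed_interval[OF _ _ v1 v2]) (use lpos j x in \<open>auto simp: cbox_interval\<close>)
  moreover have "lam * (f j x)^2 < 0" using neg fx by (simp add: mult_neg_pos)
  moreover have "f' j x * f' j x \<ge> 0" by simp
  ultimately show False by linarith
qed

definition Dt :: "nat \<Rightarrow> (nat \<Rightarrow> nat \<Rightarrow> real) \<Rightarrow> real" where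
  "Dt n E = det (mat n n (\<lambda>(i,j). E i j))"

lemma Dt_zero_iff:
  "Dt n E = 0 \<longleftrightarrow> (\<exists>u. (\<exists>i<n. u i \<noteq> 0) \<and> (\<forall>i<n. (\<Sum>j<n. E i j * u j) = 0))"
proof -
  let ?A = "mat n n (\<lambda>(i,j). E i j) :: real mat"
  have A: "?A \<in> carrier_mat n n" by simp
  have mv: "(?A *\<^sub>v v) $ i = (\<Sum>j<n. E i j * v $ j)" if "i < n" "v \<in> carrier_vec n" for v i
    using that by (auto simp: scalar_prod_def atLeast0LessThan intro!: sum.cong)
  show ?thesis
  proof
    assume "Dt n E = 0"
    then obtain v where v: "v \<in> carrier_vec n" "v \<noteq> 0\<^sub>v n" "?A *\<^sub>v v = 0\<^sub>v n"
      using det_0_iff_vec_prod_zero_field[OF A] unfolding Dt_def by auto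
    have "\<exists>i<n. v $ i \<noteq> 0"
    proof (rule ccontr)
      assume "\<not> ?thesis"
      then have "v = 0\<^sub>v n" using v(1) by (intro eq_vecI) auto
      with v(2) show False by simp
    qed
    moreover have "\<forall>i<n. (\<Sum>j<n. E i j * v $ j) = 0"
    proof (intro allI impI)
      fix i assume i: "i < n"
      have "(?A *\<^sub>v v) $ i = 0" using v(3) i by simp
      then show "(\<Sum>j<n. E i j * v $ j) = 0" using mv[OF i v(1)] by simp
    qed
    ultimately show "\<exists>u. (\<exists>i<n. u i \<noteq> 0) \<and> (\<forall>i<n. (\<Sum>j<n. E i j * u j) = 0)" by blast
  next
    assume "\<exists>u. (\<exists>i<n. u i \<noteq> 0) \<and> (\<forall>i<n. (\<Sum>j<n. E i j * u j) = 0)"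
    then obtain u where u: "\<exists>i<n. u i \<noteq> 0" "\<forall>i<n. (\<Sum>j<n. E i j * u j) = 0" by blast
    let ?v = "vec n u"
    have v: "?v \<in> carrier_vec n" by simp
    have "?v \<noteq> 0\<^sub>v n"
    proof
      assume "?v = 0\<^sub>v n"
      then have "\<forall>i<n. u i = 0" by (metis index_vec index_zero_vec(1))
      with u(1) show False by blast
    qed
    moreover have "?A *\<^sub>v ?v = 0\<^sub>v n"
    proof (rule eq_vecI)
      fix i assume "i < dim_vec (0\<^sub>v n :: real vec)"
      then have i: "i < n" by simp
      have "(\<Sum>j<n. E i j * ?v $ j) = (\<Sum>j<n. E i j * u j)" by (rule sum.cong) auto
      then show "(?A *\<^sub>v ?v) $ i = (0\<^sub>v n :: real vec) $ i" using mv[OF i v] u(2) i by simp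
    qed simp
    ultimately show "Dt n E = 0" unfolding Dt_def using det_0_iff_vec_prod_zero_field[OF A] v by blast
  qed
qed

lemma Dt_cramer:
  assumes k: "k < n"
  shows "Dt n (\<lambda>i j. if j = k then (\<Sum>j'<n. E i j' * x j') else E i j) = x k * Dt n E"
proof -
  let ?A = "mat n n (\<lambda>(i,j). E i j) :: real mat"
  have A: "?A \<in> carrier_mat n n" by simp
  have xv: "vec n x \<in> carrier_vec n" by simp
  have eq: "replace_col ?A (?A *\<^sub>v vec n x) k = mat n n (\<lambda>(i,j). if j = k then (\<Sum>j'<n. E i j' * x j') else E i j)"
    by (rule eq_matI) (auto simp: replace_col_def scalar_prod_def atLeast0LessThan intro!: sum.cong)
  show ?thesis
    using cramer_lemma_mat[OF A xv k] k unfolding Dt_def eq by simp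
qed

lemma Dt_tendsto:
  assumes "\<forall>i<n. \<forall>j<n. ((\<lambda>y. E y i j) \<longlongrightarrow> E0 i j) F"
  shows "((\<lambda>y. Dt n (E y)) \<longlongrightarrow> Dt n E0) F"
proof -
  have eq: "Dt n G = (\<Sum>p\<in>{p. p permutes {0..<n}}. signof p * (\<Prod>i = 0..<n. G i (p i)))" for G
  proof -
    have "Dt n G = (\<Sum>p\<in>{p. p permutes {0..<n}}. signof p * (\<Prod>i = 0..<n. mat n n (\<lambda>(i,j). G i j) $$ (i, p i)))"
      unfolding Dt_def by (rule det_def') simp
    also have "\<dots> = (\<Sum>p\<in>{p. p permutes {0..<n}}. signof p * (\<Prod>i = 0..<n. G i (p i)))"
      by (intro sum.cong refl arg_cong2[where f="(*)"] prod.cong) (auto simp: permutes_in_image)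
    finally show ?thesis .
  qed
  show ?thesis unfolding eq
  proof (intro tendsto_intros)
    fix p i assume "p \<in> {p. p permutes {0..<n}}" "i \<in> {0..<n}"
    then have "i < n" "p i < n" by (auto simp: permutes_in_image)
    then show "((\<lambda>y. E y i (p i)) \<longlongrightarrow> E0 i (p i)) F" using assms by blast
  qed
qed

lemma Dt_scale_col:
  assumes k: "k < n"
  shows "Dt n (\<lambda>i j. if j = k then a * c i else E i j) = a * Dt n (\<lambda>i j. if j = k then c i else E i j)"
proof -
  let ?E = "\<lambda>i j. if j = k then c i else E i j"
  let ?x = "\<lambda>j. if j = k then a else 0"
  have "(\<Sum>j'<n. ?E i j' * ?x j') = a * c i" for i
    using k by (simp add: if_distrib[of "\<lambda>z. _ * z"] sum.If_cases lessThan_def)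
  then have "(\<lambda>i j. if j = k then a * c i else E i j) = (\<lambda>i j. if j = k then (\<Sum>j'<n. ?E i j' * ?x j') else ?E i j)"
    by (intro ext) auto
  then show ?thesis using Dt_cramer[OF k, of ?E ?x] by simp
qed

lemma sum_split_add: "(\<Sum>e<a+b. G e) = (\<Sum>e<a. G e) + (\<Sum>j<b. G (a+j))" for G :: "nat \<Rightarrow> real"
  by (induction b) (auto simp: add_Suc_right)

lemma col_split:
  fixes p n :: nat and A :: real
  assumes p: "p < n"
  shows "(\<Sum>i<n. (if i = p then A else B i) * u i) = A * u p + (\<Sum>i<n. B i * (if i = p then 0 else u i))"
proof -
  have "(\<Sum>i<n. (if i = p then A else B i) * u i) = (\<Sum>i<n. (if i = p then A * u p else 0) + (if i = p then 0 else B i * u i))"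
    by (intro sum.cong) auto
  also have "\<dots> = (\<Sum>i<n. (if i = p then A * u p else 0)) + (\<Sum>i<n. (if i = p then 0 else B i * u i))"
    by (rule sum.distrib)
  also have "(\<Sum>i<n. (if i = p then A * u p else 0)) = A * u p" using sum.delta[OF finite_lessThan, of p "\<lambda>_. A * u p" n] p by simp
  also have "(\<Sum>i<n. (if i = p then 0 else B i * u i)) = (\<Sum>i<n. B i * (if i = p then 0 else u i))"
    by (intro sum.cong) auto
  finally show ?thesis .
qed

lemma Dt_cong:
  assumes "\<forall>i<n. \<forall>j<n. E i j = E' i j"
  shows "Dt n E = Dt n E'"
proof -
  have "mat n n (\<lambda>(i,j). E i j) = mat n n (\<lambda>(i,j). E' i j)"
    by (rule eq_matI) (use assms in auto)
  then show ?thesis unfolding Dt_def by simp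
qed

lemma dirichlet_seq:
  fixes l :: "nat \<Rightarrow> real" and N :: nat
  shows "\<exists>Q P. \<forall>n. Q n \<ge> int n \<and> (\<forall>j<N. \<bar>of_int (Q n) * l j - of_int (P n j)\<bar> < 1 / (real n + 1))"
proof -
  have "\<forall>n. \<exists>q p. q \<ge> int n \<and> (\<forall>j<N. \<bar>of_int q * l j - of_int (p j)\<bar> < 1 / (real n + 1))"
  proof
    fix n :: nat
    obtain q p where q: "0 < q" and qp: "\<And>i. i < N \<Longrightarrow> \<bar>of_int q * ((real n + 1) * l i) - of_int (p i)\<bar> < 1 / real (Suc n)"
      by (rule Dirichlet_approx_simult[of "Suc n" N "\<lambda>i. (real n + 1) * l i"]) (simp, blast intro: that)
    have "q * (int n + 1) \<ge> int n" using q by (simp add: algebra_simps) (smt (verit) mult_le_cancel_right1 of_nat_0_le_iff)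
    moreover have "\<forall>j<N. \<bar>of_int (q * (int n + 1)) * l j - of_int (p j)\<bar> < 1 / (real n + 1)"
      using qp by (simp add: algebra_simps)
    ultimately show "\<exists>q p. q \<ge> int n \<and> (\<forall>j<N. \<bar>of_int q * l j - of_int (p j)\<bar> < 1 / (real n + 1))" by blast
  qed
  then show ?thesis by metis
qed

locale mgraph =
  fixes N :: nat and src tgt :: "nat \<Rightarrow> 'v" and l :: "nat \<Rightarrow> real"
  assumes lpos: "\<forall>j<N. l j > 0"
begin

definition vtx where "vtx e = (if e < N then src e else tgt (e - N))"
definition rep where "rep e = (LEAST e'. vtx e' = vtx e)"
definition valx :: "(nat \<Rightarrow> real) \<Rightarrow> (nat \<Rightarrow> real) \<Rightarrow> nat \<Rightarrow> real" where
  "valx \<theta> x e = (if e < N then x e else cos (\<theta> (e-N)) * x (e-N) + sin (\<theta> (e-N)) * x e)"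
definition derx :: "(nat \<Rightarrow> real) \<Rightarrow> (nat \<Rightarrow> real) \<Rightarrow> nat \<Rightarrow> real" where
  "derx \<theta> x e = (if e < N then x (N+e) else sin (\<theta> (e-N)) * x (e-N) - cos (\<theta> (e-N)) * x e)"
definition inker where
  "inker \<theta> x \<longleftrightarrow> (\<forall>e<2*N. valx \<theta> x e = valx \<theta> x (rep e)) \<and>
     (\<forall>u. (\<Sum>e\<in>{e. e<2*N \<and> vtx e = u}. derx \<theta> x e) = 0)"
definition Ff :: "real \<Rightarrow> (nat \<Rightarrow> real) \<Rightarrow> nat \<Rightarrow> real \<Rightarrow> real" where
  "Ff s x j t = x j * cos (s*t) + x (N+j) * sin (s*t)"

lemma rep_le: "rep e \<le> e" unfolding rep_def by (rule Least_le) simp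
lemma vtx_rep: "vtx (rep e) = vtx e" unfolding rep_def by (rule LeastI[of "\<lambda>e'. vtx e' = vtx e" e]) simp
lemma rep_eq_iff: "rep e = rep e' \<longleftrightarrow> vtx e = vtx e'"
  by (metis rep_def vtx_rep)
lemma rep_rep: "rep (rep e) = rep e" using rep_eq_iff vtx_rep by blast

lemma sum_ends: "(\<Sum>e\<in>{e. e<2*N \<and> vtx e = u}. G e) =
   (\<Sum>j\<in>{j. j<N \<and> src j = u}. G j) + (\<Sum>j\<in>{j. j<N \<and> tgt j = u}. G (N+j))"
proof -
  have eq: "{e. e<2*N \<and> vtx e = u} = {j. j<N \<and> src j = u} \<union> (\<lambda>j. N+j) ` {j. j<N \<and> tgt j = u}"
  proof (intro Set.set_eqI iffI)
    fix e assume e: "e \<in> {e. e<2*N \<and> vtx e = u}"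
    show "e \<in> {j. j<N \<and> src j = u} \<union> (\<lambda>j. N+j) ` {j. j<N \<and> tgt j = u}"
    proof (cases "e < N")
      case True then show ?thesis using e by (auto simp: vtx_def)
    next
      case False
      then have "e = N + (e - N)" "e - N < N" "tgt (e-N) = u" using e by (auto simp: vtx_def)
      then show ?thesis by blast
    qed
  qed (auto simp: vtx_def)
  have "(\<Sum>e\<in>{e. e<2*N \<and> vtx e = u}. G e) = (\<Sum>j\<in>{j. j<N \<and> src j = u}. G j) + (\<Sum>e\<in>(\<lambda>j. N+j) ` {j. j<N \<and> tgt j = u}. G e)"
    unfolding eq by (rule sum.union_disjoint) auto
  also have "(\<Sum>e\<in>(\<lambda>j. N+j) ` {j. j<N \<and> tgt j = u}. G e) = (\<Sum>j\<in>{j. j<N \<and> tgt j = u}. G (N+j))"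
    by (subst sum.reindex) (auto simp: inj_on_def)
  finally show ?thesis .
qed

lemma valx_vtx:
  assumes "inker \<theta> x" "e < 2*N" "e' < 2*N" "vtx e = vtx e'"
  shows "valx \<theta> x e = valx \<theta> x e'"
  using assms rep_eq_iff unfolding inker_def by metis

lemma Ff_deriv:
  "((Ff s x j) has_real_derivative (s * (x (N+j) * cos (s*t) - x j * sin (s*t)))) (at t within S)"
  unfolding Ff_def by (rule derivative_eq_intros refl | simp)+ (simp add: algebra_simps)

lemma Ff'_deriv:
  "((\<lambda>t. s * (x (N+j) * cos (s*t) - x j * sin (s*t))) has_real_derivative (- (s^2) * Ff s x j t)) (at t within S)"
  unfolding Ff_def by (rule derivative_eq_intros refl | simp)+ (simp add: algebra_simps power2_eq_square)

lemma E1: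
  assumes s: "s > 0" and K: "inker (\<lambda>j. s * l j) x"
  shows "kirchhoff_eigenfunction N src tgt l (s^2) (Ff s x)"
  unfolding kirchhoff_eigenfunction_def
proof (intro exI conjI)
  let ?\<theta> = "\<lambda>j. s * l j"
  let ?f' = "\<lambda>j t. s * (x (N+j) * cos (s*t) - x j * sin (s*t))"
  let ?f'' = "\<lambda>j t. - (s^2) * Ff s x j t"
  show "\<forall>j<N. \<forall>t\<in>{0..l j}. (Ff s x j has_real_derivative ?f' j t) (at t within {0..l j}) \<and>
      (?f' j has_real_derivative ?f'' j t) (at t within {0..l j}) \<and> - ?f'' j t = s^2 * Ff s x j t"
    using Ff_deriv Ff'_deriv by simp
  have v0: "Ff s x j 0 = valx ?\<theta> x j" if "j < N" for j using that by (simp add: Ff_def valx_def)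
  have vl: "Ff s x j (l j) = valx ?\<theta> x (N+j)" if "j < N" for j using that by (simp add: Ff_def valx_def)
  show "\<forall>j<N. \<forall>k<N. (src j = src k \<longrightarrow> Ff s x j 0 = Ff s x k 0) \<and>
      (src j = tgt k \<longrightarrow> Ff s x j 0 = Ff s x k (l k)) \<and> (tgt j = tgt k \<longrightarrow> Ff s x j (l j) = Ff s x k (l k))"
  proof (intro allI impI conjI)
    fix j k assume jk: "j < N" "k < N"
    show "src j = src k \<Longrightarrow> Ff s x j 0 = Ff s x k 0"
      unfolding v0[OF jk(1)] v0[OF jk(2)] by (rule valx_vtx[OF K]) (use jk in \<open>auto simp: vtx_def\<close>)
    show "src j = tgt k \<Longrightarrow> Ff s x j 0 = Ff s x k (l k)"
      unfolding v0[OF jk(1)] vl[OF jk(2)] by (rule valx_vtx[OF K]) (use jk in \<open>auto simp: vtx_def\<close>)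
    show "tgt j = tgt k \<Longrightarrow> Ff s x j (l j) = Ff s x k (l k)"
      unfolding vl[OF jk(1)] vl[OF jk(2)] by (rule valx_vtx[OF K]) (use jk in \<open>auto simp: vtx_def\<close>)
  qed
  show "\<forall>u. (\<Sum>j\<in>{j. j < N \<and> src j = u}. ?f' j 0) + (\<Sum>j\<in>{j. j < N \<and> tgt j = u}. - ?f' j (l j)) = 0"
  proof
    fix u
    have "(\<Sum>j\<in>{j. j < N \<and> src j = u}. ?f' j 0) = s * (\<Sum>j\<in>{j. j < N \<and> src j = u}. derx ?\<theta> x j)"
      by (simp add: sum_distrib_left derx_def)
    moreover have "(\<Sum>j\<in>{j. j < N \<and> tgt j = u}. - ?f' j (l j)) = s * (\<Sum>j\<in>{j. j < N \<and> tgt j = u}. derx ?\<theta> x (N+j))"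
      by (simp add: sum_distrib_left derx_def algebra_simps)
    moreover have "(\<Sum>e\<in>{e. e<2*N \<and> vtx e = u}. derx ?\<theta> x e) = 0" using K unfolding inker_def by blast
    ultimately show "(\<Sum>j\<in>{j. j < N \<and> src j = u}. ?f' j 0) + (\<Sum>j\<in>{j. j < N \<and> tgt j = u}. - ?f' j (l j)) = 0"
      unfolding sum_ends by (simp add: distrib_left[symmetric])
  qed
qed

lemma E2:
  assumes s: "s > 0" and ef: "kirchhoff_eigenfunction N src tgt l (s^2) g"
  shows "\<exists>x. inker (\<lambda>j. s * l j) x \<and> (\<forall>j<N. \<forall>t\<in>{0..l j}. g j t = Ff s x j t)"
proof -
  let ?\<theta> = "\<lambda>j. s * l j"
  obtain f' f'' where D: "\<forall>j<N. \<forall>x\<in>{0..l j}.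
            (g j has_real_derivative f' j x) (at x within {0..l j}) \<and>
            (f' j has_real_derivative f'' j x) (at x within {0..l j}) \<and>
            - f'' j x = s^2 * g j x"
    and C: "\<forall>j<N. \<forall>k<N.
            (src j = src k \<longrightarrow> g j 0 = g k 0) \<and>
            (src j = tgt k \<longrightarrow> g j 0 = g k (l k)) \<and>
            (tgt j = tgt k \<longrightarrow> g j (l j) = g k (l k))"
    and K: "\<forall>v. (\<Sum>j\<in>{j. j < N \<and> src j = v}. f' j 0)
              + (\<Sum>j\<in>{j. j < N \<and> tgt j = v}. - f' j (l j)) = 0"
    using ef unfolding kirchhoff_eigenfunction_def by blast
  define x where "x i = (if i < N then g i 0 else f' (i-N) 0 / s)" for i
  have R: "g j t = Ff s x j t \<and> f' j t = - s * g j 0 * sin (s*t) + f' j 0 * cos (s*t)"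
    if j: "j < N" and t: "t \<in> {0..l j}" for j t
  proof -
    have "\<forall>t\<in>{0..l j}. g j t = g j 0 * cos (s*t) + f' j 0 / s * sin (s*t) \<and>
            f' j t = - s * g j 0 * sin (s*t) + f' j 0 * cos (s*t)"
      by (rule ode_rep[OF s refl, of "l j" "g j" "f' j" "f'' j"]) (use D j in blast)
    then have "g j t = g j 0 * cos (s*t) + f' j 0 / s * sin (s*t) \<and>
            f' j t = - s * g j 0 * sin (s*t) + f' j 0 * cos (s*t)" using t by blast
    then show ?thesis using j unfolding Ff_def x_def by simp
  qed
  have val: "valx ?\<theta> x e = (if e < N then g e 0 else g (e-N) (l (e-N)))" if "e < 2*N" for e
  proof (cases "e < N")
    case False
    then have "e - N < N" using that by auto
    moreover have "l (e-N) \<in> {0..l (e-N)}" using lpos \<open>e-N<N\<close> by (auto intro: less_imp_le)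
    ultimately have "g (e-N) (l (e-N)) = Ff s x (e-N) (l (e-N))" using R by blast
    then show ?thesis using False unfolding valx_def Ff_def by simp
  qed (simp add: valx_def x_def)
  have der1: "derx ?\<theta> x j = f' j 0 / s" if "j < N" for j using that by (simp add: derx_def x_def)
  have der2: "derx ?\<theta> x (N+j) = - f' j (l j) / s" if "j < N" for j
  proof -
    have "l j \<in> {0..l j}" using lpos that by (auto intro: less_imp_le)
    then have e: "f' j (l j) = - s * g j 0 * sin (s * l j) + f' j 0 * cos (s * l j)" using R that by blast
    have "derx ?\<theta> x (N+j) = sin (s * l j) * g j 0 - cos (s * l j) * (f' j 0 / s)" using that by (simp add: derx_def x_def)
    also have "\<dots> = (s * sin (s * l j) * g j 0 - cos (s * l j) * f' j 0) / s" using s by (simp add: field_simps)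
    also have "\<dots> = - f' j (l j) / s" unfolding e by (simp add: algebra_simps)
    finally show ?thesis .
  qed
  have cont: "valx ?\<theta> x e = valx ?\<theta> x (rep e)" if e: "e < 2*N" for e
  proof -
    have r: "rep e < 2*N" using rep_le[of e] e by auto
    have vv: "vtx (rep e) = vtx e" by (rule vtx_rep)
    show ?thesis
      unfolding val[OF e] val[OF r]
    proof (cases "e < N"; cases "rep e < N")
      assume a: "e < N" "rep e < N"
      then have "src (rep e) = src e" using vv by (simp add: vtx_def)
      have "g (rep e) 0 = g e 0" using C a \<open>src (rep e) = src e\<close> by blast
      then show "(if e < N then g e 0 else g (e - N) (l (e - N))) = (if rep e < N then g (rep e) 0 else g (rep e - N) (l (rep e - N)))"
        using a by simp
    next
      assume a: "e < N" "\<not> rep e < N"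
      then have "tgt (rep e - N) = src e" "rep e - N < N" using vv r by (auto simp: vtx_def)
      have "g e 0 = g (rep e - N) (l (rep e - N))" using C a \<open>tgt (rep e - N) = src e\<close> \<open>rep e - N < N\<close> by metis
      then show "(if e < N then g e 0 else g (e - N) (l (e - N))) = (if rep e < N then g (rep e) 0 else g (rep e - N) (l (rep e - N)))"
        using a by simp
    next
      assume a: "\<not> e < N" "rep e < N"
      then have "src (rep e) = tgt (e - N)" "e - N < N" using vv e by (auto simp: vtx_def)
      have "g (rep e) 0 = g (e - N) (l (e - N))" using C a \<open>src (rep e) = tgt (e - N)\<close> \<open>e - N < N\<close> by metis
      then show "(if e < N then g e 0 else g (e - N) (l (e - N))) = (if rep e < N then g (rep e) 0 else g (rep e - N) (l (rep e - N)))"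
        using a by simp
    next
      assume a: "\<not> e < N" "\<not> rep e < N"
      then have "tgt (rep e - N) = tgt (e - N)" "e - N < N" "rep e - N < N" using vv e r by (auto simp: vtx_def)
      have "g (e - N) (l (e - N)) = g (rep e - N) (l (rep e - N))" using C \<open>tgt (rep e - N) = tgt (e - N)\<close> \<open>e - N < N\<close> \<open>rep e - N < N\<close> by metis
      then show "(if e < N then g e 0 else g (e - N) (l (e - N))) = (if rep e < N then g (rep e) 0 else g (rep e - N) (l (rep e - N)))"
        using a by simp
    qed
  qed
  have kir: "(\<Sum>e\<in>{e. e<2*N \<and> vtx e = u}. derx ?\<theta> x e) = 0" for u
  proof -
    have "(\<Sum>e\<in>{e. e<2*N \<and> vtx e = u}. derx ?\<theta> x e) =
      (\<Sum>j\<in>{j. j<N \<and> src j = u}. f' j 0 / s) + (\<Sum>j\<in>{j. j<N \<and> tgt j = u}. - f' j (l j) / s)"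
      unfolding sum_ends using der1 der2 by simp
    also have "\<dots> = ((\<Sum>j\<in>{j. j<N \<and> src j = u}. f' j 0) + (\<Sum>j\<in>{j. j<N \<and> tgt j = u}. - f' j (l j))) / s"
      by (simp add: sum_divide_distrib add_divide_distrib)
    also have "\<dots> = 0" using K by simp
    finally show ?thesis .
  qed
  show ?thesis using cont kir R unfolding inker_def by blast
qed

lemma uniq_coef:
  assumes s: "s > 0" and j: "j < N" and eq: "\<forall>t\<in>{0..l j}. Ff s x j t = Ff s y j t"
  shows "x j = y j \<and> x (N+j) = y (N+j)"
proof -
  have l: "l j > 0" using lpos j by auto
  have "0 \<in> {0..l j}" using l by auto
  then have "Ff s x j 0 = Ff s y j 0" using eq by blast
  then have a: "x j = y j" by (simp add: Ff_def)
  define t0 :: real where "t0 = min (l j) (pi / (2 * s))"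
  have t: "t0 \<in> {0..l j}" "t0 > 0" using l s by (auto simp: t0_def)
  have "s * t0 \<le> pi / 2" using s by (auto simp: t0_def min_def field_simps split: if_splits)
  moreover have "0 < s*t0" using t s by simp
  ultimately have "sin (s*t0) > 0" using pi_gt_zero by (intro sin_gt_zero) linarith+
  moreover have "Ff s x j t0 = Ff s y j t0" using eq t by blast
  then have "x (N+j) * sin (s*t0) = y (N+j) * sin (s*t0)" using a by (simp add: Ff_def)
  ultimately show ?thesis using a by simp
qed

definition VAL where "VAL \<theta> e i = valx \<theta> (\<lambda>i'. if i' = i then 1 else 0) e"
definition DER where "DER \<theta> e i = derx \<theta> (\<lambda>i'. if i' = i then 1 else 0) e"
definition Ment where
  "Ment \<theta> e i = (if rep e \<noteq> e then VAL \<theta> e i - VAL \<theta> (rep e) i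
     else (\<Sum>e'\<in>{e'. e' < 2*N \<and> vtx e' = vtx e}. DER \<theta> e' i))"
definition rowx where
  "rowx \<theta> x e = (if rep e \<noteq> e then valx \<theta> x e - valx \<theta> x (rep e)
     else (\<Sum>e'\<in>{e'. e' < 2*N \<and> vtx e' = vtx e}. derx \<theta> x e'))"

lemma sum_delta_aux: "(\<Sum>i\<in>{x. x < m}. c * (if a = i then 1 else 0) * y i) = (if a < m then c * y a else (0::real))"
  for a m :: nat
proof -
  have "(\<Sum>i\<in>{x. x < m}. c * (if a = i then 1 else 0) * y i) = (\<Sum>i\<in>{x. x < m}. if i = a then c * y a else 0)"
    by (intro sum.cong) auto
  also have "\<dots> = (if a < m then c * y a else 0)" using sum.delta[OF finite_Collect_less_nat, of a "\<lambda>_. c * y a" m] by simp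
  finally show ?thesis .
qed

lemma VAL_sum: "e < 2*N \<Longrightarrow> (\<Sum>i<2*N. VAL \<theta> e i * x i) = valx \<theta> x e"
  unfolding VAL_def valx_def
  by (auto simp: if_distrib[of "\<lambda>z. z * _"] sum.distrib distrib_right sum.If_cases lessThan_def Collect_conj_eq[symmetric] sum_delta_aux)

lemma DER_sum: "e < 2*N \<Longrightarrow> (\<Sum>i<2*N. DER \<theta> e i * x i) = derx \<theta> x e"
  unfolding DER_def derx_def
  by (auto simp: if_distrib[of "\<lambda>z. z * _"] sum.distrib left_diff_distrib sum_subtractf sum.If_cases lessThan_def Collect_conj_eq[symmetric] sum_delta_aux)

lemma rep_less: "e < 2*N \<Longrightarrow> rep e < 2*N" using rep_le[of e] by simp

lemma rowx_sum: "e < 2*N \<Longrightarrow> (\<Sum>i<2*N. Ment \<theta> e i * x i) = rowx \<theta> x e"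
proof -
  assume e: "e < 2*N"
  show ?thesis
  proof (cases "rep e \<noteq> e")
    case True
    have "(\<Sum>i<2*N. Ment \<theta> e i * x i) = (\<Sum>i<2*N. VAL \<theta> e i * x i) - (\<Sum>i<2*N. VAL \<theta> (rep e) i * x i)"
      using True by (simp add: Ment_def left_diff_distrib sum_subtractf)
    then show ?thesis using True e rep_less[OF e] by (simp add: VAL_sum rowx_def)
  next
    case False
    have "(\<Sum>i<2*N. Ment \<theta> e i * x i) = (\<Sum>i<2*N. \<Sum>e'\<in>{e'. e' < 2*N \<and> vtx e' = vtx e}. DER \<theta> e' i * x i)"
      using False by (simp add: Ment_def sum_distrib_right)
    also have "\<dots> = (\<Sum>e'\<in>{e'. e' < 2*N \<and> vtx e' = vtx e}. \<Sum>i<2*N. DER \<theta> e' i * x i)" by (rule sum.swap)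
    also have "\<dots> = (\<Sum>e'\<in>{e'. e' < 2*N \<and> vtx e' = vtx e}. derx \<theta> x e')" by (intro sum.cong) (auto simp: DER_sum)
    finally show ?thesis using False by (simp add: rowx_def)
  qed
qed

lemma kernel_iff: "(\<forall>e<2*N. rowx \<theta> x e = 0) \<longleftrightarrow> inker \<theta> x"
proof
  assume R: "\<forall>e<2*N. rowx \<theta> x e = 0"
  have c: "\<forall>e<2*N. valx \<theta> x e = valx \<theta> x (rep e)"
  proof (intro allI impI)
    fix e assume e: "e < 2*N"
    show "valx \<theta> x e = valx \<theta> x (rep e)"
    proof (cases "rep e = e")
      case False then show ?thesis using R e unfolding rowx_def by auto
    qed simp
  qed
  have k: "(\<Sum>e\<in>{e. e<2*N \<and> vtx e = u}. derx \<theta> x e) = 0" for u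
  proof (cases "\<exists>e<2*N. vtx e = u")
    case True
    then obtain e where e: "e < 2*N" "vtx e = u" by blast
    have "rowx \<theta> x (rep e) = 0" using R rep_less[OF e(1)] by blast
    then show ?thesis using rep_rep[of e] vtx_rep[of e] e unfolding rowx_def by simp
  next
    case False
    have "{e. e<2*N \<and> vtx e = u} = {}" using False by auto
    then show ?thesis by (simp only: sum.empty)
  qed
  show "inker \<theta> x" unfolding inker_def using c k by blast
next
  assume "inker \<theta> x"
  then show "\<forall>e<2*N. rowx \<theta> x e = 0" unfolding inker_def rowx_def by auto
qed

lemma grp:
  "(\<Sum>e<2*N. G (rep e) * H e) = (\<Sum>e<2*N. (if rep e = e then G e * (\<Sum>e'\<in>{e'. e'<2*N \<and> vtx e' = vtx e}. H e') else 0))"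
  for G H :: "nat \<Rightarrow> real"
proof -
  let ?T = "{r. r < 2*N \<and> rep r = r}"
  have "(\<Sum>e<2*N. G (rep e) * H e) = (\<Sum>r\<in>?T. \<Sum>e\<in>{e\<in>{..<2*N}. rep e = r}. G (rep e) * H e)"
    by (rule sum.group[symmetric]) (auto simp: rep_less rep_rep)
  also have "\<dots> = (\<Sum>r\<in>?T. G r * (\<Sum>e'\<in>{e'. e'<2*N \<and> vtx e' = vtx r}. H e'))"
  proof (rule sum.cong[OF refl])
    fix r assume r: "r \<in> ?T"
    have "{e\<in>{..<2*N}. rep e = r} = {e'. e'<2*N \<and> vtx e' = vtx r}"
      using r rep_eq_iff[of _ r] by auto
    moreover have "(\<Sum>e\<in>{e\<in>{..<2*N}. rep e = r}. G (rep e) * H e) = (\<Sum>e\<in>{e\<in>{..<2*N}. rep e = r}. G r * H e)"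
      by (intro sum.cong) auto
    ultimately show "(\<Sum>e\<in>{e\<in>{..<2*N}. rep e = r}. G (rep e) * H e) = G r * (\<Sum>e'\<in>{e'. e'<2*N \<and> vtx e' = vtx r}. H e')"
      by (simp add: sum_distrib_left)
  qed
  also have "\<dots> = (\<Sum>e<2*N. (if rep e = e then G e * (\<Sum>e'\<in>{e'. e'<2*N \<and> vtx e' = vtx e}. H e') else 0))"
    by (simp add: sum.If_cases lessThan_def Collect_conj_eq[symmetric] conj_commute)
  finally show ?thesis .
qed

lemma Lident:
  fixes P Q P2 Q2 :: "nat \<Rightarrow> real"
  assumes cP: "\<forall>e<2*N. P e = P (rep e)" and kQ: "\<forall>u. (\<Sum>e\<in>{e. e<2*N \<and> vtx e = u}. Q e) = 0"
  shows "(\<Sum>e<2*N. (if rep e \<noteq> e then Q e else - P e) *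
     (if rep e \<noteq> e then P2 e - P2 (rep e) else (\<Sum>e'\<in>{e'. e'<2*N \<and> vtx e' = vtx e}. Q2 e')))
     = (\<Sum>e<2*N. Q e * P2 e) - (\<Sum>e<2*N. P e * Q2 e)"
proof -
  let ?A3 = "\<lambda>e. (if rep e = e then P e * (\<Sum>e'\<in>{e'. e'<2*N \<and> vtx e' = vtx e}. Q2 e') else 0)"
  have "(\<Sum>e<2*N. (if rep e \<noteq> e then Q e else - P e) *
     (if rep e \<noteq> e then P2 e - P2 (rep e) else (\<Sum>e'\<in>{e'. e'<2*N \<and> vtx e' = vtx e}. Q2 e')))
    = (\<Sum>e<2*N. Q e * P2 e - P2 (rep e) * Q e - ?A3 e)"
    by (intro sum.cong refl) (auto simp: algebra_simps)
  also have "\<dots> = (\<Sum>e<2*N. Q e * P2 e) - (\<Sum>e<2*N. P2 (rep e) * Q e) - (\<Sum>e<2*N. ?A3 e)"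
    by (simp add: sum_subtractf)
  also have "(\<Sum>e<2*N. P2 (rep e) * Q e) = 0"
  proof -
    have z: "\<And>e. sum Q {e'. e'<2*N \<and> vtx e' = vtx e} = 0" using kQ by blast
    show ?thesis unfolding grp[of P2 Q] z by (simp only: mult_zero_right if_cancel sum.neutral_const)
  qed
  also have "(\<Sum>e<2*N. ?A3 e) = (\<Sum>e<2*N. P (rep e) * Q2 e)"
    unfolding grp[of P Q2] by simp
  also have "\<dots> = (\<Sum>e<2*N. P e * Q2 e)"
    using cP by (intro sum.cong) auto
  finally show ?thesis by simp
qed

lemma poly_id: "(vb * ya + (sn * va - cs * vb) * (cs * ya + sn * yb)) - (va * yb + (cs * va + sn * vb) * (sn * ya - cs * yb)) = (vb * ya - va * yb) * (1 - (sn * sn + cs * cs))"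
  for va vb ya yb sn cs :: real
  by (simp add: algebra_simps)

lemma sym_ident:
  "(\<Sum>e<2*N. derx \<theta> v e * valx \<theta> y e) = (\<Sum>e<2*N. valx \<theta> v e * derx \<theta> y e)"
proof -
  have "(\<Sum>e<2*N. derx \<theta> v e * valx \<theta> y e) = (\<Sum>e<N+N. derx \<theta> v e * valx \<theta> y e)" by (simp add: mult_2)
  also have "\<dots> = (\<Sum>j<N. v (N+j) * y j) + (\<Sum>j<N. (sin (\<theta> j) * v j - cos (\<theta> j) * v (N+j)) * (cos (\<theta> j) * y j + sin (\<theta> j) * y (N+j)))"
    unfolding sum_split_add by (simp add: derx_def valx_def)
  also have "\<dots> = (\<Sum>j<N. v j * y (N+j)) + (\<Sum>j<N. (cos (\<theta> j) * v j + sin (\<theta> j) * v (N+j)) * (sin (\<theta> j) * y j - cos (\<theta> j) * y (N+j)))"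
  proof -
    have "v (N+j) * y j + (sin (\<theta> j) * v j - cos (\<theta> j) * v (N+j)) * (cos (\<theta> j) * y j + sin (\<theta> j) * y (N+j))
      = v j * y (N+j) + (cos (\<theta> j) * v j + sin (\<theta> j) * v (N+j)) * (sin (\<theta> j) * y j - cos (\<theta> j) * y (N+j))" for j
    proof -
      have "(v (N+j) * y j + (sin (\<theta> j) * v j - cos (\<theta> j) * v (N+j)) * (cos (\<theta> j) * y j + sin (\<theta> j) * y (N+j)))
        - (v j * y (N+j) + (cos (\<theta> j) * v j + sin (\<theta> j) * v (N+j)) * (sin (\<theta> j) * y j - cos (\<theta> j) * y (N+j)))
        = (v (N+j) * y j - v j * y (N+j)) * (1 - (sin (\<theta> j) * sin (\<theta> j) + cos (\<theta> j) * cos (\<theta> j)))"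
        (is "?A - ?B = _") by (rule poly_id)
      also have "\<dots> = 0" using sin_cos_squared_add[of "\<theta> j"] by (simp add: power2_eq_square)
      finally show ?thesis by linarith
    qed
    then show ?thesis by (simp add: sum.distrib[symmetric])
  qed
  also have "\<dots> = (\<Sum>e<N+N. valx \<theta> v e * derx \<theta> y e)"
    unfolding sum_split_add by (simp add: derx_def valx_def)
  finally show ?thesis by (simp add: mult_2)
qed

definition thT :: "(nat \<Rightarrow> real) \<Rightarrow> real \<Rightarrow> nat \<Rightarrow> real" where "thT \<theta>0 t = (\<lambda>j. \<theta>0 j + t * l j)"
definition valD where
  "valD \<theta>0 v e = (if e < N then 0 else l (e-N) * (- sin (\<theta>0 (e-N)) * v (e-N) + cos (\<theta>0 (e-N)) * v e))"
definition derD where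
  "derD \<theta>0 v e = (if e < N then 0 else l (e-N) * (cos (\<theta>0 (e-N)) * v (e-N) + sin (\<theta>0 (e-N)) * v e))"
definition rowD where
  "rowD \<theta>0 v e = (if rep e \<noteq> e then valD \<theta>0 v e - valD \<theta>0 v (rep e)
     else (\<Sum>e'\<in>{e'. e' < 2*N \<and> vtx e' = vtx e}. derD \<theta>0 v e'))"
definition wv where "wv \<theta>0 v e = (if rep e \<noteq> e then derx \<theta>0 v e else - valx \<theta>0 v e)"

lemma thT0: "thT \<theta>0 0 = \<theta>0" by (simp add: thT_def)

lemma dvalx: "((\<lambda>t. valx (thT \<theta>0 t) v e) has_real_derivative valD \<theta>0 v e) (at 0)"
proof (cases "e < N")
  case True then show ?thesis by (simp add: valx_def valD_def)
next
  case False
  have "((\<lambda>t. cos (\<theta>0 (e-N) + t * l (e-N)) * v (e-N) + sin (\<theta>0 (e-N) + t * l (e-N)) * v e) has_real_derivative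
     l (e-N) * (- sin (\<theta>0 (e-N)) * v (e-N) + cos (\<theta>0 (e-N)) * v e)) (at 0)"
    by (auto intro!: derivative_eq_intros simp: algebra_simps)
  then show ?thesis using False by (simp add: valx_def valD_def thT_def algebra_simps)
qed

lemma dderx: "((\<lambda>t. derx (thT \<theta>0 t) v e) has_real_derivative derD \<theta>0 v e) (at 0)"
proof (cases "e < N")
  case True then show ?thesis by (simp add: derx_def derD_def)
next
  case False
  have "((\<lambda>t. sin (\<theta>0 (e-N) + t * l (e-N)) * v (e-N) - cos (\<theta>0 (e-N) + t * l (e-N)) * v e) has_real_derivative
     l (e-N) * (cos (\<theta>0 (e-N)) * v (e-N) + sin (\<theta>0 (e-N)) * v e)) (at 0)"
    by (auto intro!: derivative_eq_intros simp: algebra_simps)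
  then show ?thesis using False by (simp add: derx_def derD_def thT_def algebra_simps)
qed

lemma drowx: "((\<lambda>t. rowx (thT \<theta>0 t) v e) has_real_derivative rowD \<theta>0 v e) (at 0)"
proof (cases "rep e \<noteq> e")
  case True
  then show ?thesis unfolding rowx_def rowD_def using True
    by (simp add: DERIV_diff dvalx)
next
  case False
  then show ?thesis unfolding rowx_def rowD_def
    by (simp add: DERIV_sum dderx)
qed

lemma valx_tendsto:
  fixes F :: "'a::t2_space filter"
  assumes X: "\<forall>j<N. ((\<lambda>y. X y j) \<longlongrightarrow> \<theta> j) F" and e: "e < 2*N"
  shows "((\<lambda>y. valx (X y) x e) \<longlongrightarrow> valx \<theta> x e) F"
proof (cases "e < N")
  case True then show ?thesis by (simp add: valx_def)
next
  case False
  then have "e - N < N" using e by auto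
  then have XX: "((\<lambda>y. X y (e-N)) \<longlongrightarrow> \<theta> (e-N)) F" using X by blast
  have "((\<lambda>y. cos (X y (e-N)) * x (e-N) + sin (X y (e-N)) * x e) \<longlongrightarrow> cos (\<theta> (e-N)) * x (e-N) + sin (\<theta> (e-N)) * x e) F"
    using tendsto_cos[OF XX] tendsto_sin[OF XX] by (auto intro!: tendsto_intros)
  then show ?thesis using False by (simp add: valx_def)
qed

lemma derx_tendsto:
  fixes F :: "'a::t2_space filter"
  assumes X: "\<forall>j<N. ((\<lambda>y. X y j) \<longlongrightarrow> \<theta> j) F" and e: "e < 2*N"
  shows "((\<lambda>y. derx (X y) x e) \<longlongrightarrow> derx \<theta> x e) F"
proof (cases "e < N")
  case True then show ?thesis by (simp add: derx_def)
next
  case False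
  then have "e - N < N" using e by auto
  then have XX: "((\<lambda>y. X y (e-N)) \<longlongrightarrow> \<theta> (e-N)) F" using X by blast
  have "((\<lambda>y. sin (X y (e-N)) * x (e-N) - cos (X y (e-N)) * x e) \<longlongrightarrow> sin (\<theta> (e-N)) * x (e-N) - cos (\<theta> (e-N)) * x e) F"
    using tendsto_cos[OF XX] tendsto_sin[OF XX] by (auto intro!: tendsto_intros)
  then show ?thesis using False by (simp add: derx_def)
qed

lemma Ment_tendsto:
  fixes F :: "'a::t2_space filter"
  assumes X: "\<forall>j<N. ((\<lambda>y. X y j) \<longlongrightarrow> \<theta> j) F" and e: "e < 2*N"
  shows "((\<lambda>y. Ment (X y) e i) \<longlongrightarrow> Ment \<theta> e i) F"
proof (cases "rep e \<noteq> e")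
  case True
  have "((\<lambda>y. VAL (X y) e i - VAL (X y) (rep e) i) \<longlongrightarrow> VAL \<theta> e i - VAL \<theta> (rep e) i) F"
    unfolding VAL_def by (intro tendsto_diff valx_tendsto[OF X] e rep_less)
  then show ?thesis using True by (simp add: Ment_def)
next
  case False
  have "((\<lambda>y. \<Sum>e'\<in>{e'. e' < 2*N \<and> vtx e' = vtx e}. DER (X y) e' i) \<longlongrightarrow> (\<Sum>e'\<in>{e'. e' < 2*N \<and> vtx e' = vtx e}. DER \<theta> e' i)) F"
    unfolding DER_def by (intro tendsto_sum derx_tendsto[OF X]) simp
  then show ?thesis using False by (simp add: Ment_def)
qed

lemma Ment_cong:
  assumes "\<forall>j<N. cos (\<theta> j) = cos (\<theta>' j) \<and> sin (\<theta> j) = sin (\<theta>' j)" and e: "e < 2*N"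
  shows "Ment \<theta> e i = Ment \<theta>' e i"
proof -
  have v: "valx \<theta> x e' = valx \<theta>' x e'" if "e' < 2*N" for x e'
    using assms(1) that by (cases "e' < N") (auto simp: valx_def)
  have d: "derx \<theta> x e' = derx \<theta>' x e'" if "e' < 2*N" for x e'
    using assms(1) that by (cases "e' < N") (auto simp: derx_def)
  show ?thesis unfolding Ment_def VAL_def DER_def using v d e rep_less[OF e]
    by (auto intro!: sum.cong)
qed

lemma rowx_scale: "e < 2*N \<Longrightarrow> rowx \<theta> (\<lambda>i. c * x i) e = c * rowx \<theta> x e"
  by (simp add: rowx_sum[symmetric] sum_distrib_left algebra_simps)

lemma wY:
  assumes v: "inker \<theta>0 v"
  shows "(\<Sum>e<2*N. wv \<theta>0 v e * rowx \<theta>0 y e) = 0"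
proof -
  have cP: "\<forall>e<2*N. valx \<theta>0 v e = valx \<theta>0 v (rep e)" and kQ: "\<forall>u. (\<Sum>e\<in>{e. e<2*N \<and> vtx e = u}. derx \<theta>0 v e) = 0"
    using v unfolding inker_def by auto
  have "(\<Sum>e<2*N. wv \<theta>0 v e * rowx \<theta>0 y e) = (\<Sum>e<2*N. derx \<theta>0 v e * valx \<theta>0 y e) - (\<Sum>e<2*N. valx \<theta>0 v e * derx \<theta>0 y e)"
    unfolding wv_def rowx_def by (rule Lident[OF cP kQ])
  also have "\<dots> = 0" using sym_ident by simp
  finally show ?thesis .
qed

lemma poly_id2: "(sn * a - cs * b) * (ll * (- sn * a + cs * b)) - (cs * a + sn * b) * (ll * (cs * a + sn * b)) = - ll * (a * a + b * b) * (sn * sn + cs * cs)"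
  for sn cs a b ll :: real
  by (simp add: algebra_simps)

lemma wD:
  assumes v: "inker \<theta>0 v"
  shows "(\<Sum>e<2*N. wv \<theta>0 v e * rowD \<theta>0 v e) = - (\<Sum>j<N. l j * ((v j)^2 + (v (N+j))^2))"
proof -
  have cP: "\<forall>e<2*N. valx \<theta>0 v e = valx \<theta>0 v (rep e)" and kQ: "\<forall>u. (\<Sum>e\<in>{e. e<2*N \<and> vtx e = u}. derx \<theta>0 v e) = 0"
    using v unfolding inker_def by auto
  have "(\<Sum>e<2*N. wv \<theta>0 v e * rowD \<theta>0 v e) = (\<Sum>e<2*N. derx \<theta>0 v e * valD \<theta>0 v e) - (\<Sum>e<2*N. valx \<theta>0 v e * derD \<theta>0 v e)"
    unfolding wv_def rowD_def by (rule Lident[OF cP kQ])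
  also have "\<dots> = (\<Sum>e<2*N. derx \<theta>0 v e * valD \<theta>0 v e - valx \<theta>0 v e * derD \<theta>0 v e)"
    by (simp add: sum_subtractf)
  also have "\<dots> = (\<Sum>e<N+N. derx \<theta>0 v e * valD \<theta>0 v e - valx \<theta>0 v e * derD \<theta>0 v e)" by (simp add: mult_2)
  also have "\<dots> = (\<Sum>j<N. derx \<theta>0 v (N+j) * valD \<theta>0 v (N+j) - valx \<theta>0 v (N+j) * derD \<theta>0 v (N+j))"
    unfolding sum_split_add by (simp add: valD_def derD_def)
  also have "\<dots> = (\<Sum>j<N. - (l j * ((v j)^2 + (v (N+j))^2)))"
  proof (rule sum.cong[OF refl])
    fix j
    have "derx \<theta>0 v (N+j) * valD \<theta>0 v (N+j) - valx \<theta>0 v (N+j) * derD \<theta>0 v (N+j)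
      = - l j * (v j * v j + v (N+j) * v (N+j)) * (sin (\<theta>0 j) * sin (\<theta>0 j) + cos (\<theta>0 j) * cos (\<theta>0 j))"
      using poly_id2[of "sin (\<theta>0 j)" "v j" "cos (\<theta>0 j)" "v (N+j)" "l j"] by (simp add: derx_def valD_def valx_def derD_def)
    also have "\<dots> = - (l j * ((v j)^2 + (v (N+j))^2))"
      using sin_cos_squared_add[of "\<theta>0 j"] by (simp add: power2_eq_square)
    finally show "derx \<theta>0 v (N+j) * valD \<theta>0 v (N+j) - valx \<theta>0 v (N+j) * derD \<theta>0 v (N+j) = - (l j * ((v j)^2 + (v (N+j))^2))" .
  qed
  also have "\<dots> = - (\<Sum>j<N. l j * ((v j)^2 + (v (N+j))^2))" by (simp add: sum_negf)
  finally show ?thesis .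
qed

lemma core_L:
  assumes v: "inker \<theta>0 v" and vnz: "\<exists>j<N. v j \<noteq> 0 \<or> v (N+j) \<noteq> 0"
    and uniq: "\<forall>y. inker \<theta>0 y \<longrightarrow> (\<exists>c. \<forall>i<2*N. y i = c * v i)"
    and p: "p < 2*N" and vp: "v p \<noteq> 0"
  shows "Dt (2*N) (\<lambda>e i. if i = p then rowD \<theta>0 v e else Ment \<theta>0 e i) \<noteq> 0"
proof
  assume "Dt (2*N) (\<lambda>e i. if i = p then rowD \<theta>0 v e else Ment \<theta>0 e i) = 0"
  then obtain u where u1: "\<exists>i<2*N. u i \<noteq> 0"
    and u2: "\<forall>e<2*N. (\<Sum>i<2*N. (if i = p then rowD \<theta>0 v e else Ment \<theta>0 e i) * u i) = 0"
    unfolding Dt_zero_iff by blast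
  have R: "rowD \<theta>0 v e * u p + rowx \<theta>0 (\<lambda>i. if i = p then 0 else u i) e = 0" if e: "e < 2*N" for e
    using u2 e col_split[OF p, of "rowD \<theta>0 v e" "Ment \<theta>0 e" u] rowx_sum[OF e] by simp
  have S: "(\<Sum>j<N. l j * ((v j)^2 + (v (N+j))^2)) > 0"
  proof -
    obtain j where j: "j < N" "v j \<noteq> 0 \<or> v (N+j) \<noteq> 0" using vnz by blast
    have "(v j)^2 + (v (N+j))^2 > 0" using j(2) by (simp add: sum_power2_gt_zero_iff)
    then have "l j * ((v j)^2 + (v (N+j))^2) > 0" using j lpos by simp
    moreover have "\<forall>i\<in>{..<N}. 0 \<le> l i * ((v i)^2 + (v (N+i))^2)"
    proof
      fix i assume "i \<in> {..<N}"
      then have "0 \<le> l i" using lpos by (simp add: less_imp_le)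
      then show "0 \<le> l i * ((v i)^2 + (v (N+i))^2)" by simp
    qed
    ultimately show ?thesis using j by (intro sum_pos2[of "{..<N}" j]) auto
  qed
  show False
  proof (cases "u p = 0")
    case False
    define y where "y i = (- 1 / u p) * (\<lambda>i. if i = p then 0 else u i) i" for i
    have ry: "rowx \<theta>0 y e = rowD \<theta>0 v e" if e: "e < 2*N" for e
    proof -
      have "rowx \<theta>0 y e = (- 1 / u p) * rowx \<theta>0 (\<lambda>i. if i = p then 0 else u i) e"
        unfolding y_def by (rule rowx_scale[OF e])
      also have "\<dots> = rowD \<theta>0 v e" using R[OF e] False by (simp add: field_simps)
      finally show ?thesis .
    qed
    have "(\<Sum>e<2*N. wv \<theta>0 v e * rowD \<theta>0 v e) = (\<Sum>e<2*N. wv \<theta>0 v e * rowx \<theta>0 y e)"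
      using ry by (intro sum.cong) auto
    also have "\<dots> = 0" by (rule wY[OF v])
    finally show False using wD[OF v] S by simp
  next
    case True
    then have uu: "(\<lambda>i. if i = p then 0 else u i) = u" by auto
    have "\<forall>e<2*N. rowx \<theta>0 u e = 0" using R True uu by simp
    then have "inker \<theta>0 u" by (simp add: kernel_iff)
    then obtain c where c: "\<forall>i<2*N. u i = c * v i" using uniq by blast
    then have "c = 0" using True vp p by auto
    then show False using c u1 by auto
  qed
qed

lemma thT_tendsto: "\<forall>j<N. ((\<lambda>t. thT \<theta>0 t j) \<longlongrightarrow> \<theta>0 j) (at 0)"
proof (intro allI impI)
  fix j
  have "((\<lambda>t. \<theta>0 j + t * l j) \<longlongrightarrow> \<theta>0 j + 0 * l j) (at 0)" by (intro tendsto_intros)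
  then show "((\<lambda>t. thT \<theta>0 t j) \<longlongrightarrow> \<theta>0 j) (at 0)" by (simp add: thT_def)
qed

lemma stepA:
  assumes v: "inker \<theta>0 v" and vnz: "\<exists>j<N. v j \<noteq> 0 \<or> v (N+j) \<noteq> 0"
    and uniq: "\<forall>y. inker \<theta>0 y \<longrightarrow> (\<exists>c. \<forall>i<2*N. y i = c * v i)"
    and p: "p < 2*N" and vp: "v p \<noteq> 0"
  shows "\<exists>d>0. \<forall>\<delta>. 0 < \<delta> \<and> \<delta> < d \<longrightarrow>
     Dt (2*N) (Ment (thT \<theta>0 \<delta>)) * Dt (2*N) (Ment (thT \<theta>0 (-\<delta>))) < 0"
proof -
  define n where "n = 2*N"
  define c where "c t e = (\<Sum>i<n. Ment (thT \<theta>0 t) e i * v i) / t" for t e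
  define h where "h t = Dt n (\<lambda>e i. if i = p then c t e else Ment (thT \<theta>0 t) e i)" for t
  define L where "L = Dt n (\<lambda>e i. if i = p then rowD \<theta>0 v e else Ment \<theta>0 e i)"
  have pn: "p < n" using p n_def by simp
  have eqh: "v p * Dt n (Ment (thT \<theta>0 t)) = t * h t" if t: "t \<noteq> 0" for t
  proof -
    have "v p * Dt n (Ment (thT \<theta>0 t)) = Dt n (\<lambda>e i. if i = p then (\<Sum>i'<n. Ment (thT \<theta>0 t) e i' * v i') else Ment (thT \<theta>0 t) e i)"
      using Dt_cramer[OF pn, of "Ment (thT \<theta>0 t)" v] by simp
    also have "(\<lambda>e i. if i = p then (\<Sum>i'<n. Ment (thT \<theta>0 t) e i' * v i') else Ment (thT \<theta>0 t) e i)
        = (\<lambda>e i. if i = p then t * c t e else Ment (thT \<theta>0 t) e i)"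
      using t by (intro ext) (simp add: c_def)
    also have "Dt n \<dots> = t * h t" unfolding h_def by (rule Dt_scale_col[OF pn])
    finally show ?thesis .
  qed
  have limc: "((\<lambda>t. c t e) \<longlongrightarrow> rowD \<theta>0 v e) (at 0)" if e: "e < n" for e
  proof -
    have "((\<lambda>t. (rowx (thT \<theta>0 t) v e - rowx (thT \<theta>0 0) v e) / (t - 0)) \<longlongrightarrow> rowD \<theta>0 v e) (at 0)"
      using drowx[of \<theta>0 v e] by (simp add: has_field_derivative_iff)
    moreover have "rowx (thT \<theta>0 0) v e = 0" using v e kernel_iff[of \<theta>0 v] n_def by (simp add: thT0)
    moreover have "(\<lambda>t. c t e) = (\<lambda>t. (rowx (thT \<theta>0 t) v e - rowx (thT \<theta>0 0) v e) / (t - 0))"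
      using e calculation(2) unfolding c_def n_def by (intro ext) (simp add: rowx_sum)
    ultimately show ?thesis by simp
  qed
  have limh: "(h \<longlongrightarrow> L) (at 0)"
    unfolding h_def L_def
  proof (rule Dt_tendsto, intro allI impI)
    fix e i assume e: "e < n" and i: "i < n"
    show "((\<lambda>t. if i = p then c t e else Ment (thT \<theta>0 t) e i) \<longlongrightarrow> (if i = p then rowD \<theta>0 v e else Ment \<theta>0 e i)) (at 0)"
    proof (cases "i = p")
      case True then show ?thesis using limc[OF e] by simp
    next
      case False
      have "((\<lambda>t. Ment (thT \<theta>0 t) e i) \<longlongrightarrow> Ment \<theta>0 e i) (at 0)"
        by (rule Ment_tendsto[OF thT_tendsto]) (use e n_def in simp)
      then show ?thesis using False by simp
    qed
  qed
  have Lnz: "L \<noteq> 0" unfolding L_def n_def by (rule core_L[OF v vnz uniq p vp])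
  have "((\<lambda>t. h t * L) \<longlongrightarrow> L * L) (at 0)" by (intro tendsto_intros limh)
  moreover have "0 < L * L" using Lnz by (cases "L > 0") (auto simp: mult_neg_neg)
  ultimately have "eventually (\<lambda>t. 0 < h t * L) (at 0)" by (rule order_tendstoD(1))
  then obtain d where d: "d > 0" and dd: "\<forall>t. t \<noteq> 0 \<and> dist t 0 < d \<longrightarrow> 0 < h t * L"
    unfolding eventually_at by auto
  show ?thesis
  proof (intro exI[of _ d] conjI allI impI d)
    fix \<delta> :: real assume \<delta>: "0 < \<delta> \<and> \<delta> < d"
    have h1: "0 < h \<delta> * L" using dd \<delta> by auto
    have h2: "0 < h (-\<delta>) * L" using dd \<delta> by auto
    have hh: "0 < h \<delta> * h (-\<delta>)"
    proof -
      have "0 < (h \<delta> * L) * (h (-\<delta>) * L)" using h1 h2 by simp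
      then have "0 < (h \<delta> * h (-\<delta>)) * (L * L)" by (simp add: algebra_simps)
      then show ?thesis using \<open>0 < L * L\<close> by (simp add: zero_less_mult_iff)
    qed
    have e1: "v p * Dt n (Ment (thT \<theta>0 \<delta>)) = \<delta> * h \<delta>" using eqh \<delta> by simp
    have e2: "v p * Dt n (Ment (thT \<theta>0 (-\<delta>))) = - \<delta> * h (-\<delta>)" using eqh[of "-\<delta>"] \<delta> by simp
    have "(v p * v p) * (Dt n (Ment (thT \<theta>0 \<delta>)) * Dt n (Ment (thT \<theta>0 (-\<delta>)))) = - (\<delta> * \<delta>) * (h \<delta> * h (-\<delta>))"
      using e1 e2 by (simp add: algebra_simps) (metis e1 e2 mult.assoc mult.left_commute mult_minus_left)
    moreover have "- (\<delta> * \<delta>) * (h \<delta> * h (-\<delta>)) < 0" using hh \<delta> by (simp add: mult_pos_pos)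
    moreover have "v p * v p > 0" using vp by (cases "v p > 0") (auto simp: mult_neg_neg)
    ultimately have "(v p * v p) * (Dt n (Ment (thT \<theta>0 \<delta>)) * Dt n (Ment (thT \<theta>0 (-\<delta>)))) < 0"
      and "v p * v p > 0" by linarith+
    then show "Dt (2*N) (Ment (thT \<theta>0 \<delta>)) * Dt (2*N) (Ment (thT \<theta>0 (-\<delta>))) < 0"
      unfolding n_def by (simp add: mult_less_0_iff)
  qed
qed

lemma stepB:
  assumes k: "k > 0" and d: "d > 0"
    and sg: "\<forall>\<delta>. 0 < \<delta> \<and> \<delta> < d \<longrightarrow>
     Dt (2*N) (Ment (thT (\<lambda>j. k * l j) \<delta>)) * Dt (2*N) (Ment (thT (\<lambda>j. k * l j) (-\<delta>))) < 0"
  shows "\<exists>s \<psi>. s \<ge> real m \<and> Dt (2*N) (Ment \<psi>) = 0 \<and>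
     (\<forall>j<N. \<bar>\<psi> j - k * l j\<bar> \<le> (1 + d * l j) / (real m + 1)) \<and>
     (\<forall>j<N. cos (s * l j) = cos (\<psi> j) \<and> sin (s * l j) = sin (\<psi> j))"
proof -
  define \<theta>0 where "\<theta>0 = (\<lambda>j. k * l j)"
  define \<delta> where "\<delta> = d / (2 * (real m + 1))"
  have m1: "real m + 1 > 0" by simp
  have \<delta>1: "0 < \<delta>" unfolding \<delta>_def using d m1 by simp
  have \<delta>3: "\<delta> \<le> d / (real m + 1)" unfolding \<delta>_def
    by (rule divide_left_mono) (use d m1 in auto)
  have \<delta>2: "\<delta> \<le> d / 2" unfolding \<delta>_def
    by (rule divide_left_mono) (use d m1 in auto)
  have \<delta>: "0 < \<delta>" "\<delta> < d" "\<delta> \<le> d / (real m + 1)" using \<delta>1 \<delta>2 \<delta>3 d by auto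
  define G where "G t = Dt (2*N) (Ment (thT \<theta>0 t))" for t
  have Gs: "G \<delta> * G (-\<delta>) < 0" using sg \<delta> unfolding G_def \<theta>0_def by blast
  obtain Q P where QP: "\<forall>n. Q n \<ge> int n \<and> (\<forall>j<N. \<bar>of_int (Q n) * l j - of_int (P n j)\<bar> < 1 / (real n + 1))"
    using dirichlet_seq[of N l] by blast
  define \<phi> where "\<phi> n j = 2 * pi * (of_int (Q n) * l j - of_int (P n j))" for n j
  have \<phi>b: "\<bar>\<phi> n j\<bar> \<le> 2 * pi / (real n + 1)" if "j < N" for n j
  proof -
    have "\<bar>of_int (Q n) * l j - of_int (P n j)\<bar> \<le> 1 / (real n + 1)" using QP that by (simp add: less_imp_le)
    then have "2 * pi * \<bar>of_int (Q n) * l j - of_int (P n j)\<bar> \<le> 2 * pi * (1 / (real n + 1))"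
      by (intro mult_left_mono) auto
    then show ?thesis unfolding \<phi>_def by (simp add: abs_mult)
  qed
  have \<phi>lim: "((\<lambda>n. \<phi> n j) \<longlongrightarrow> 0) sequentially" if j: "j < N" for j
  proof (rule Lim_null_comparison)
    show "eventually (\<lambda>n. norm (\<phi> n j) \<le> 2 * pi * inverse (real (Suc n))) sequentially"
      using \<phi>b[OF j] by (simp add: field_simps)
    show "((\<lambda>n. 2 * pi * inverse (real (Suc n))) \<longlongrightarrow> 0) sequentially"
      using tendsto_mult[OF tendsto_const LIMSEQ_inverse_real_of_nat, of "2*pi"] by simp
  qed
  define X where "X t n j = \<theta>0 j + \<phi> n j + t * l j" for t n j
  have Xlim: "\<forall>j<N. ((\<lambda>n. X t n j) \<longlongrightarrow> thT \<theta>0 t j) sequentially" for t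
  proof (intro allI impI)
    fix j assume j: "j < N"
    have "((\<lambda>n. \<theta>0 j + \<phi> n j + t * l j) \<longlongrightarrow> \<theta>0 j + 0 + t * l j) sequentially"
      by (intro tendsto_intros \<phi>lim[OF j])
    then show "((\<lambda>n. X t n j) \<longlongrightarrow> thT \<theta>0 t j) sequentially" by (simp add: X_def thT_def)
  qed
  have Dlim: "((\<lambda>n. Dt (2*N) (Ment (X t n))) \<longlongrightarrow> G t) sequentially" for t
    unfolding G_def by (intro Dt_tendsto allI impI Ment_tendsto[OF Xlim]) simp
  have ev1: "eventually (\<lambda>n. 0 < Dt (2*N) (Ment (X \<delta> n)) * G \<delta>) sequentially"
  proof (rule order_tendstoD(1))
    show "((\<lambda>n. Dt (2*N) (Ment (X \<delta> n)) * G \<delta>) \<longlongrightarrow> G \<delta> * G \<delta>) sequentially" by (intro tendsto_intros Dlim)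
    have "G \<delta> \<noteq> 0" using Gs by auto
    then show "0 < G \<delta> * G \<delta>" by (cases "G \<delta> > 0") (auto simp: mult_neg_neg)
  qed
  have ev2: "eventually (\<lambda>n. 0 < Dt (2*N) (Ment (X (-\<delta>) n)) * G (-\<delta>)) sequentially"
  proof (rule order_tendstoD(1))
    show "((\<lambda>n. Dt (2*N) (Ment (X (-\<delta>) n)) * G (-\<delta>)) \<longlongrightarrow> G (-\<delta>) * G (-\<delta>)) sequentially" by (intro tendsto_intros Dlim)
    have "G (-\<delta>) \<noteq> 0" using Gs by auto
    then show "0 < G (-\<delta>) * G (-\<delta>)" by (cases "G (-\<delta>) > 0") (auto simp: mult_neg_neg)
  qed
  have ev3: "eventually (\<lambda>n. real n \<ge> real m + d + 2 * pi * (real m + 1)) sequentially"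
    by (rule eventually_sequentiallyI[of "nat \<lceil>real m + d + 2 * pi * (real m + 1)\<rceil>"]) linarith
  obtain n where n1: "0 < Dt (2*N) (Ment (X \<delta> n)) * G \<delta>" and n2: "0 < Dt (2*N) (Ment (X (-\<delta>) n)) * G (-\<delta>)"
    and n3: "real n \<ge> real m + d + 2 * pi * (real m + 1)"
    using eventually_happens'[OF sequentially_bot eventually_conj[OF ev1 eventually_conj[OF ev2 ev3]]] by blast
  define F where "F t = Dt (2*N) (Ment (X t n))" for t
  have Fs: "F (-\<delta>) * F \<delta> < 0"
  proof -
    have "0 < (F \<delta> * G \<delta>) * (F (-\<delta>) * G (-\<delta>))" using n1 n2 unfolding F_def by simp
    then have "0 < (F (-\<delta>) * F \<delta>) * (G \<delta> * G (-\<delta>))" by (simp add: algebra_simps)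
    then show ?thesis using Gs by (auto simp: zero_less_mult_iff mult_less_0_iff)
  qed
  have Fc: "continuous_on {-\<delta>..\<delta>} F"
  proof (rule continuous_at_imp_continuous_on, rule ballI)
    fix t assume "t \<in> {-\<delta>..\<delta>}"
    have "\<forall>j<N. ((\<lambda>t'. X t' n j) \<longlongrightarrow> X t n j) (at t)"
      unfolding X_def by (intro allI impI tendsto_intros)
    then have "((\<lambda>t'. F t') \<longlongrightarrow> F t) (at t)"
      unfolding F_def by (intro Dt_tendsto allI impI Ment_tendsto) simp_all
    then show "isCont F t" by (simp add: isCont_def)
  qed
  obtain t where t: "-\<delta> \<le> t" "t \<le> \<delta>" and Ft: "F t = 0"
  proof (cases "F (-\<delta>) < 0")
    case True
    then have "F \<delta> > 0" using Fs by (simp add: mult_less_0_iff)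
    then show ?thesis using IVT'[of F "-\<delta>" 0 \<delta>] True Fc \<delta> that by auto
  next
    case False
    then have "F (-\<delta>) > 0" "F \<delta> < 0" using Fs by (auto simp: mult_less_0_iff)
    then show ?thesis using IVT2'[of F \<delta> 0 "-\<delta>"] Fc \<delta> that by auto
  qed
  define s where "s = k + 2 * pi * of_int (Q n) + t"
  define \<psi> where "\<psi> = X t n"
  show ?thesis
  proof (intro exI conjI allI impI)
    have "of_int (Q n) \<ge> real n" using QP by (metis of_int_le_iff of_int_of_nat_eq)
    then have "2 * pi * of_int (Q n) \<ge> 2 * pi * real n" by (intro mult_left_mono) auto
    moreover have "2 * pi * real n \<ge> 1 * real n" using pi_gt3 by (intro mult_right_mono) auto
    ultimately show "s \<ge> real m" unfolding s_def using n3 t \<delta> k pi_gt_zero by (smt (verit) mult_nonneg_nonneg of_nat_0_le_iff)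
    show "Dt (2*N) (Ment \<psi>) = 0" using Ft unfolding F_def \<psi>_def .
  next
    fix j assume j: "j < N"
    have lj: "l j > 0" using lpos j by auto
    have "\<bar>\<psi> j - k * l j\<bar> = \<bar>\<phi> n j + t * l j\<bar>" unfolding \<psi>_def X_def \<theta>0_def by simp
    also have "\<dots> \<le> \<bar>\<phi> n j\<bar> + \<bar>t\<bar> * l j" using lj by (simp add: abs_mult abs_triangle_ineq[THEN order_trans])
    also have "\<dots> \<le> 2 * pi / (real n + 1) + \<delta> * l j"
      using \<phi>b[OF j] t lj by (intro add_mono mult_right_mono) auto
    also have "2 * pi / (real n + 1) \<le> 1 / (real m + 1)"
      using n3 d pi_gt_zero by (simp add: field_simps)
    also have "\<delta> * l j \<le> d / (real m + 1) * l j" using \<delta> lj by (intro mult_right_mono) auto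
    finally show "\<bar>\<psi> j - k * l j\<bar> \<le> (1 + d * l j) / (real m + 1)" by (simp add: add_divide_distrib)
  next
    fix j assume j: "j < N"
    have "s * l j = \<psi> j + 2 * pi * of_int (P n j)"
      unfolding s_def \<psi>_def X_def \<theta>0_def \<phi>_def by (simp add: algebra_simps)
    then show "cos (s * l j) = cos (\<psi> j)"
      by (simp add: cos_add sin_add)
  next
    fix j assume j: "j < N"
    have "s * l j = \<psi> j + 2 * pi * of_int (P n j)"
      unfolding s_def \<psi>_def X_def \<theta>0_def \<phi>_def by (simp add: algebra_simps)
    then show "sin (s * l j) = sin (\<psi> j)"
      by (simp add: cos_add sin_add)
  qed
qed

lemma ker_split:
  assumes ker: "\<forall>e<2*N. (\<Sum>i<2*N. Ment \<psi> e i * y i) = 0" and p: "p < 2*N" and e: "e < 2*N"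
  shows "(\<Sum>i<2*N. Ment \<psi> e i * (if i = p then 0 else y i)) = - Ment \<psi> e p * y p"
proof -
  have "(\<Sum>i<2*N. (if i = p then Ment \<psi> e p else Ment \<psi> e i) * y i) = Ment \<psi> e p * y p + (\<Sum>i<2*N. Ment \<psi> e i * (if i = p then 0 else y i))"
    by (rule col_split[OF p])
  moreover have "(\<Sum>i<2*N. (if i = p then Ment \<psi> e p else Ment \<psi> e i) * y i) = (\<Sum>i<2*N. Ment \<psi> e i * y i)"
    by (intro sum.cong) auto
  ultimately show ?thesis using ker e by simp
qed

lemma cram_kernel:
  assumes ker: "\<forall>e<2*N. (\<Sum>i<2*N. Ment \<psi> e i * y i) = 0" and yp: "y p = 1" and p: "p < 2*N"
    and i: "i < 2*N" "i \<noteq> p"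
  shows "Dt (2*N) (\<lambda>e i'. if i' = i then - Ment \<psi> e p else (if i' = p then R e else Ment \<psi> e i'))
       = y i * Dt (2*N) (\<lambda>e i'. if i' = p then R e else Ment \<psi> e i')"
proof -
  let ?C = "\<lambda>e i'. if i' = p then R e else Ment \<psi> e i'"
  let ?x = "\<lambda>i'. if i' = p then 0 else y i'"
  have s: "(\<Sum>i'<2*N. ?C e i' * ?x i') = - Ment \<psi> e p" if e: "e < 2*N" for e
  proof -
    have "(\<Sum>i'<2*N. ?C e i' * ?x i') = R e * ?x p + (\<Sum>i'<2*N. Ment \<psi> e i' * (if i' = p then 0 else ?x i'))"
      by (rule col_split[OF p])
    also have "(\<Sum>i'<2*N. Ment \<psi> e i' * (if i' = p then 0 else ?x i')) = (\<Sum>i'<2*N. Ment \<psi> e i' * ?x i')"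
      by (intro sum.cong) auto
    also have "\<dots> = - Ment \<psi> e p * y p" by (rule ker_split[OF ker p e])
    finally show ?thesis using yp by simp
  qed
  have "Dt (2*N) (\<lambda>e i'. if i' = i then - Ment \<psi> e p else ?C e i') = Dt (2*N) (\<lambda>e i'. if i' = i then (\<Sum>j'<2*N. ?C e j' * ?x j') else ?C e i')"
    by (rule Dt_cong) (use s in simp)
  also have "\<dots> = ?x i * Dt (2*N) ?C" by (rule Dt_cramer[OF i(1)])
  finally show ?thesis using i by simp
qed

lemma Ff_nz:
  assumes s: "s > 0" and j: "j < N" and z: "z j \<noteq> 0 \<or> z (N+j) \<noteq> 0"
  shows "\<exists>t\<in>{0..l j}. Ff s z j t \<noteq> 0"
proof (rule ccontr)
  assume "\<not> ?thesis"
  then have "\<forall>t\<in>{0..l j}. Ff s z j t = Ff s (\<lambda>_. 0) j t" by (simp add: Ff_def)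
  then have "z j = (\<lambda>_. 0::real) j \<and> z (N+j) = (\<lambda>_. 0::real) (N+j)" by (rule uniq_coef[OF s j])
  then show False using z by simp
qed

lemma Ff_scale: "(\<forall>i<2*N. x i = c * z i) \<Longrightarrow> j < N \<Longrightarrow> Ff s x j t = c * Ff s z j t"
  by (simp add: Ff_def algebra_simps)

lemma ker_cong:
  assumes cs: "\<forall>j<N. cos (s * l j) = cos (\<psi> j) \<and> sin (s * l j) = sin (\<psi> j)"
  shows "inker (\<lambda>j. s * l j) y \<longleftrightarrow> (\<forall>e<2*N. (\<Sum>i<2*N. Ment \<psi> e i * y i) = 0)"
proof -
  have "inker (\<lambda>j. s * l j) y \<longleftrightarrow> (\<forall>e<2*N. rowx (\<lambda>j. s * l j) y e = 0)" by (simp add: kernel_iff)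
  also have "\<dots> \<longleftrightarrow> (\<forall>e<2*N. (\<Sum>i<2*N. Ment (\<lambda>j. s * l j) e i * y i) = 0)" by (simp add: rowx_sum)
  also have "\<dots> \<longleftrightarrow> (\<forall>e<2*N. (\<Sum>i<2*N. Ment \<psi> e i * y i) = 0)"
  proof -
    have "Ment (\<lambda>j. s * l j) e i = Ment \<psi> e i" if "e < 2*N" for e i
      by (rule Ment_cong) (use cs that in auto)
    then show ?thesis by auto
  qed
  finally show ?thesis .
qed

lemma stepC:
  assumes k: "k > 0" and v0: "inker (\<lambda>j. k * l j) v" and vfull: "\<forall>j<N. v j \<noteq> 0 \<or> v (N+j) \<noteq> 0" and N0: "N > 0"
    and uniq0: "\<forall>y. inker (\<lambda>j. k * l j) y \<longrightarrow> (\<exists>c. \<forall>i<2*N. y i = c * v i)"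
    and p: "p < 2*N" and vp: "v p \<noteq> 0"
  shows "\<exists>s. s \<ge> T \<and> simple_eigenvalue N src tgt l (s^2) \<and>
           (\<exists>f. kirchhoff_eigenfunction N src tgt l (s^2) f \<and> full_support N l f)"
proof -
  define \<theta>0 where "\<theta>0 = (\<lambda>j. k * l j)"
  define n where "n = 2*N"
  have v: "inker \<theta>0 v" using v0 unfolding \<theta>0_def .
  have uniq: "\<forall>y. inker \<theta>0 y \<longrightarrow> (\<exists>c. \<forall>i<2*N. y i = c * v i)" using uniq0 unfolding \<theta>0_def .
  have vnz: "\<exists>j<N. v j \<noteq> 0 \<or> v (N+j) \<noteq> 0" using vfull N0 by blast
  obtain d where d: "d > 0" and sg: "\<forall>\<delta>. 0 < \<delta> \<and> \<delta> < d \<longrightarrow> Dt (2*N) (Ment (thT \<theta>0 \<delta>)) * Dt (2*N) (Ment (thT \<theta>0 (-\<delta>))) < 0"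
    using stepA[OF v vnz uniq p vp] by blast
  have "\<forall>m. \<exists>s \<psi>. s \<ge> real m \<and> Dt (2*N) (Ment \<psi>) = 0 \<and> (\<forall>j<N. \<bar>\<psi> j - k * l j\<bar> \<le> (1 + d * l j) / (real m + 1)) \<and>
      (\<forall>j<N. cos (s * l j) = cos (\<psi> j) \<and> sin (s * l j) = sin (\<psi> j))"
    using stepB[OF k d] sg unfolding \<theta>0_def by blast
  then obtain S \<Psi> where B: "\<forall>m. S m \<ge> real m \<and> Dt (2*N) (Ment (\<Psi> m)) = 0 \<and> (\<forall>j<N. \<bar>\<Psi> m j - k * l j\<bar> \<le> (1 + d * l j) / (real m + 1)) \<and>
      (\<forall>j<N. cos (S m * l j) = cos (\<Psi> m j) \<and> sin (S m * l j) = sin (\<Psi> m j))"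
    by metis
  have \<Psi>lim: "\<forall>j<N. ((\<lambda>m. \<Psi> m j) \<longlongrightarrow> \<theta>0 j) sequentially"
  proof (intro allI impI)
    fix j assume j: "j < N"
    have "((\<lambda>m. \<Psi> m j - \<theta>0 j) \<longlongrightarrow> 0) sequentially"
    proof (rule Lim_null_comparison)
      have "norm (\<Psi> m j - \<theta>0 j) \<le> (1 + d * l j) * inverse (real (Suc m))" for m
      proof -
        have "(1 + d * l j) / (real m + 1) = (1 + d * l j) * inverse (real (Suc m))" by (simp add: divide_inverse add.commute)
        then show ?thesis using B j unfolding \<theta>0_def by (metis real_norm_def)
      qed
      then show "eventually (\<lambda>m. norm (\<Psi> m j - \<theta>0 j) \<le> (1 + d * l j) * inverse (real (Suc m))) sequentially"
        by (intro always_eventually allI)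
      show "((\<lambda>m. (1 + d * l j) * inverse (real (Suc m))) \<longlongrightarrow> 0) sequentially"
        using tendsto_mult[OF tendsto_const LIMSEQ_inverse_real_of_nat, of "1 + d * l j"] by simp
    qed
    then show "((\<lambda>m. \<Psi> m j) \<longlongrightarrow> \<theta>0 j) sequentially" using Lim_null[of "\<lambda>m. \<Psi> m j" "\<theta>0 j" sequentially] by simp
  qed
  define C where "C \<psi> = (\<lambda>e i. if i = p then rowD \<theta>0 v e else Ment \<psi> e i)" for \<psi>
  define L where "L = Dt n (C \<theta>0)"
  have Lnz: "L \<noteq> 0" unfolding L_def C_def n_def by (rule core_L[OF v vnz uniq p vp])
  have Ctend: "((\<lambda>m. C (\<Psi> m) e i) \<longlongrightarrow> C \<theta>0 e i) sequentially" if "e < n" for e i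
  proof (cases "i = p")
    case True then show ?thesis by (simp add: C_def)
  next
    case False
    have "((\<lambda>m. Ment (\<Psi> m) e i) \<longlongrightarrow> Ment \<theta>0 e i) sequentially"
      by (rule Ment_tendsto[OF \<Psi>lim]) (use that n_def in simp)
    then show ?thesis using False by (simp add: C_def)
  qed
  have Klim: "((\<lambda>m. Dt n (C (\<Psi> m))) \<longlongrightarrow> L) sequentially"
    unfolding L_def by (rule Dt_tendsto) (use Ctend in blast)
  have evK: "eventually (\<lambda>m. Dt n (C (\<Psi> m)) \<noteq> 0) sequentially"
    using tendsto_imp_eventually_ne[OF Klim Lnz] .
  define ii where "ii j = (if v j \<noteq> 0 then j else N + j)" for j
  have ii: "ii j < n \<and> v (ii j) \<noteq> 0 \<and> (ii j = j \<or> ii j = N + j)" if "j < N" for j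
    using that vfull unfolding ii_def n_def by auto
  define Nm where "Nm i \<psi> = Dt n (\<lambda>e i'. if i' = i then - Ment \<psi> e p else C \<psi> e i')" for i \<psi>
  have vker: "\<forall>e<2*N. (\<Sum>i<2*N. Ment \<theta>0 e i * (v i / v p)) = 0"
  proof (intro allI impI)
    fix e assume e: "e < 2*N"
    have "rowx \<theta>0 v e = 0" using v e kernel_iff by blast
    then have "(\<Sum>i<2*N. Ment \<theta>0 e i * v i) = 0" using rowx_sum[OF e] by simp
    then show "(\<Sum>i<2*N. Ment \<theta>0 e i * (v i / v p)) = 0"
      by (simp add: sum_divide_distrib[symmetric] mult.assoc[symmetric] times_divide_eq_right)
  qed
  have Nm0: "Nm i \<theta>0 = (v i / v p) * L" if "i < n" "i \<noteq> p" for i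
    unfolding Nm_def L_def C_def n_def
    by (rule cram_kernel[OF vker _ p]) (use vp that n_def in auto)
  have evN: "eventually (\<lambda>m. \<forall>j\<in>{..<N}. ii j \<noteq> p \<longrightarrow> Nm (ii j) (\<Psi> m) \<noteq> 0) sequentially"
  proof (rule eventually_ball_finite, simp, rule ballI)
    fix j assume "j \<in> {..<N}"
    then have j: "j < N" by simp
    show "eventually (\<lambda>m. ii j \<noteq> p \<longrightarrow> Nm (ii j) (\<Psi> m) \<noteq> 0) sequentially"
    proof (cases "ii j = p")
      case True then show ?thesis by simp
    next
      case False
      have "Nm (ii j) \<theta>0 \<noteq> 0" using Nm0[of "ii j"] ii[OF j] False Lnz vp by simp
      moreover have "((\<lambda>m. Nm (ii j) (\<Psi> m)) \<longlongrightarrow> Nm (ii j) \<theta>0) sequentially"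
        unfolding Nm_def
      proof (rule Dt_tendsto, intro allI impI)
        fix e i' assume e: "e < n" and i': "i' < n"
        have "((\<lambda>m. Ment (\<Psi> m) e p) \<longlongrightarrow> Ment \<theta>0 e p) sequentially"
          by (rule Ment_tendsto[OF \<Psi>lim]) (use e n_def in simp)
        then show "((\<lambda>m. if i' = ii j then - Ment (\<Psi> m) e p else C (\<Psi> m) e i') \<longlongrightarrow> (if i' = ii j then - Ment \<theta>0 e p else C \<theta>0 e i')) sequentially"
          using Ctend[OF e, of i'] by (cases "i' = ii j") (auto intro: tendsto_minus)
      qed
      ultimately have "eventually (\<lambda>m. Nm (ii j) (\<Psi> m) \<noteq> 0) sequentially"
        using tendsto_imp_eventually_ne by blast
      then show ?thesis by (rule eventually_mono) simp
    qed
  qed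
  have evT: "eventually (\<lambda>m. real m \<ge> max T 1) sequentially"
    by (rule eventually_sequentiallyI[of "nat \<lceil>max T 1\<rceil>"]) linarith
  obtain m where mK: "Dt n (C (\<Psi> m)) \<noteq> 0" and mN: "\<forall>j\<in>{..<N}. ii j \<noteq> p \<longrightarrow> Nm (ii j) (\<Psi> m) \<noteq> 0"
    and mT: "real m \<ge> max T 1"
    using eventually_happens'[OF sequentially_bot eventually_conj[OF evK eventually_conj[OF evN evT]]] by blast
  define s where "s = S m"
  define \<psi> where "\<psi> = \<Psi> m"
  have sT: "s \<ge> T" and s0: "s > 0" using B mT unfolding s_def by (smt (verit))+
  have D0: "Dt (2*N) (Ment \<psi>) = 0" using B unfolding \<psi>_def by blast
  have cs: "\<forall>j<N. cos (s * l j) = cos (\<psi> j) \<and> sin (s * l j) = sin (\<psi> j)" using B unfolding s_def \<psi>_def by blast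
  note kc = ker_cong[OF cs]
  have zero_p: "\<forall>i<n. y i = 0" if ky: "\<forall>e<2*N. (\<Sum>i<2*N. Ment \<psi> e i * y i) = 0" and yp: "y p = 0" for y
  proof (rule ccontr)
    assume "\<not> (\<forall>i<n. y i = 0)"
    then have ex: "\<exists>i<n. y i \<noteq> 0" by auto
    have "\<forall>e<n. (\<Sum>i<n. C \<psi> e i * y i) = 0"
    proof (intro allI impI)
      fix e assume e: "e < n"
      have "(\<Sum>i<n. C \<psi> e i * y i) = rowD \<theta>0 v e * y p + (\<Sum>i<n. Ment \<psi> e i * (if i = p then 0 else y i))"
        unfolding C_def by (rule col_split) (use p n_def in simp)
      also have "(\<Sum>i<n. Ment \<psi> e i * (if i = p then 0 else y i)) = (\<Sum>i<n. Ment \<psi> e i * y i)"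
        using yp by (intro sum.cong) auto
      finally show "(\<Sum>i<n. C \<psi> e i * y i) = 0" using yp ky e n_def by simp
    qed
    then have "Dt n (C \<psi>) = 0" using ex Dt_zero_iff by blast
    then show False using mK unfolding \<psi>_def by simp
  qed
  obtain u where u1: "\<exists>i<2*N. u i \<noteq> 0" and u2: "\<forall>e<2*N. (\<Sum>i<2*N. Ment \<psi> e i * u i) = 0"
    using D0 unfolding Dt_zero_iff by blast
  have up: "u p \<noteq> 0" using zero_p[OF u2] u1 n_def by auto
  define z where "z i = u i / u p" for i
  have zp: "z p = 1" using up by (simp add: z_def)
  have kz: "\<forall>e<2*N. (\<Sum>i<2*N. Ment \<psi> e i * z i) = 0"
  proof (intro allI impI)
    fix e assume "e < 2*N"
    then have "(\<Sum>i<2*N. Ment \<psi> e i * u i) / u p = 0" using u2 by simp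
    then show "(\<Sum>i<2*N. Ment \<psi> e i * z i) = 0"
      by (simp add: z_def sum_divide_distrib times_divide_eq_right)
  qed
  have zfull: "z j \<noteq> 0 \<or> z (N+j) \<noteq> 0" if j: "j < N" for j
  proof (cases "ii j = p")
    case True
    then show ?thesis using zp ii[OF j] by auto
  next
    case False
    have "Nm (ii j) \<psi> = z (ii j) * Dt n (C \<psi>)"
      unfolding Nm_def C_def n_def by (rule cram_kernel[OF kz zp p]) (use ii[OF j] False n_def in auto)
    moreover have "Nm (ii j) \<psi> \<noteq> 0" using mN j False unfolding \<psi>_def by auto
    ultimately have "z (ii j) \<noteq> 0" by auto
    then show ?thesis using ii[OF j] by auto
  qed
  have dim1: "\<forall>i<2*N. x i = x p * z i" if kx: "\<forall>e<2*N. (\<Sum>i<2*N. Ment \<psi> e i * x i) = 0" for x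
  proof -
    define y where "y i = x i - x p * z i" for i
    have "\<forall>e<2*N. (\<Sum>i<2*N. Ment \<psi> e i * y i) = 0"
    proof (intro allI impI)
      fix e assume e: "e < 2*N"
      have "(\<Sum>i<2*N. Ment \<psi> e i * y i) = (\<Sum>i<2*N. Ment \<psi> e i * x i) - x p * (\<Sum>i<2*N. Ment \<psi> e i * z i)"
        unfolding y_def by (simp add: algebra_simps sum_subtractf sum_distrib_left)
      then show "(\<Sum>i<2*N. Ment \<psi> e i * y i) = 0" using kx kz e by simp
    qed
    moreover have "y p = 0" using zp by (simp add: y_def)
    ultimately have "\<forall>i<n. y i = 0" by (rule zero_p)
    then show ?thesis unfolding y_def n_def by simp
  qed
  have zker: "inker (\<lambda>j. s * l j) z" using kc kz by blast
  have ef: "kirchhoff_eigenfunction N src tgt l (s^2) (Ff s z)" by (rule E1[OF s0 zker])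
  have fs: "full_support N l (Ff s z)" unfolding full_support_def using Ff_nz[OF s0] zfull by blast
  have simple: "simple_eigenvalue N src tgt l (s^2)"
    unfolding simple_eigenvalue_def
  proof (intro exI conjI)
    show "kirchhoff_eigenfunction N src tgt l (s^2) (Ff s z)" by (rule ef)
    show "graph_fun_nonzero N l (Ff s z)" unfolding graph_fun_nonzero_def using Ff_nz[OF s0 N0 zfull[OF N0]] N0 by blast
    show "\<forall>g. kirchhoff_eigenfunction N src tgt l (s^2) g \<longrightarrow> (\<exists>c. \<forall>j<N. \<forall>t\<in>{0..l j}. g j t = c * Ff s z j t)"
    proof (intro allI impI)
    fix g assume g: "kirchhoff_eigenfunction N src tgt l (s^2) g"
    obtain x where x: "inker (\<lambda>j. s * l j) x" and gx: "\<forall>j<N. \<forall>t\<in>{0..l j}. g j t = Ff s x j t"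
      using E2[OF s0 g] by blast
    have "\<forall>i<2*N. x i = x p * z i" using dim1 kc x by blast
    then have "\<forall>j<N. \<forall>t\<in>{0..l j}. g j t = x p * Ff s z j t" using gx Ff_scale by simp
    then show "\<exists>c. \<forall>j<N. \<forall>t\<in>{0..l j}. g j t = c * Ff s z j t" by blast
    qed
  qed
  show ?thesis using sT simple ef fs by blast
qed

end


theorem mainTheorem17:
  fixes N :: nat and src tgt :: "nat \<Rightarrow> 'v" and l :: "nat \<Rightarrow> real"
  assumes "\<forall>j<N. l j > 0"
    and "\<exists>lam. lam \<noteq> 0 \<and> simple_eigenvalue N src tgt l lam \<and>
           (\<exists>f. kirchhoff_eigenfunction N src tgt l lam f \<and> full_support N l f)"
  shows "infinite {lam. simple_eigenvalue N src tgt l lam \<and>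
           (\<exists>f. kirchhoff_eigenfunction N src tgt l lam f \<and> full_support N l f)}"
proof -
  interpret mgraph N src tgt l using assms(1) by unfold_locales
  obtain lam0 f where l0: "lam0 \<noteq> 0" and simp0: "simple_eigenvalue N src tgt l lam0"
    and kf: "kirchhoff_eigenfunction N src tgt l lam0 f" and fsf: "full_support N l f"
    using assms(2) by blast
  obtain \<phi>0 where k\<phi>: "kirchhoff_eigenfunction N src tgt l lam0 \<phi>0" and nz\<phi>: "graph_fun_nonzero N l \<phi>0"
    and all\<phi>: "\<forall>g. kirchhoff_eigenfunction N src tgt l lam0 g \<longrightarrow> (\<exists>c. \<forall>j<N. \<forall>x\<in>{0..l j}. g j x = c * \<phi>0 j x)"
    using simp0 unfolding simple_eigenvalue_def by blast
  have N0: "N > 0" using nz\<phi> unfolding graph_fun_nonzero_def by auto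
  have "\<not> lam0 < 0" using eig_not_neg[OF assms(1) k\<phi> nz\<phi>] by blast
  then have lpos0: "lam0 > 0" using l0 by simp
  define k where "k = sqrt lam0"
  have k: "k > 0" using lpos0 by (simp add: k_def)
  have lk: "lam0 = k^2" using lpos0 by (simp add: k_def)
  have kf': "kirchhoff_eigenfunction N src tgt l (k^2) f" using kf lk by simp
  obtain v where v: "inker (\<lambda>j. k * l j) v" and fv: "\<forall>j<N. \<forall>t\<in>{0..l j}. f j t = Ff k v j t"
    using E2[OF k kf'] by blast
  have vfull: "\<forall>j<N. v j \<noteq> 0 \<or> v (N+j) \<noteq> 0"
  proof (intro allI impI)
    fix j assume j: "j < N"
    obtain x where x: "x \<in> {0..l j}" "f j x \<noteq> 0" using fsf j unfolding full_support_def by blast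
    then have "Ff k v j x \<noteq> 0" using fv j by auto
    then show "v j \<noteq> 0 \<or> v (N+j) \<noteq> 0" by (auto simp: Ff_def)
  qed
  obtain c0 where c0: "\<forall>j<N. \<forall>x\<in>{0..l j}. f j x = c0 * \<phi>0 j x" using all\<phi> kf by blast
  have c0nz: "c0 \<noteq> 0"
  proof
    assume "c0 = 0"
    obtain x where x: "x \<in> {0..l 0}" "f 0 x \<noteq> 0" using fsf N0 unfolding full_support_def by blast
    then show False using c0 N0 \<open>c0 = 0\<close> by auto
  qed
  have uniq: "\<forall>y. inker (\<lambda>j. k * l j) y \<longrightarrow> (\<exists>c. \<forall>i<2*N. y i = c * v i)"
  proof (intro allI impI)
    fix y assume y: "inker (\<lambda>j. k * l j) y"
    have "kirchhoff_eigenfunction N src tgt l lam0 (Ff k y)" using E1[OF k y] lk by simp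
    then obtain c where c: "\<forall>j<N. \<forall>x\<in>{0..l j}. Ff k y j x = c * \<phi>0 j x" using all\<phi> by blast
    have co: "y j = (c / c0) * v j \<and> y (N+j) = (c / c0) * v (N+j)" if j: "j < N" for j
    proof -
      have "\<forall>t\<in>{0..l j}. Ff k y j t = Ff k (\<lambda>i. (c / c0) * v i) j t"
      proof
        fix t assume t: "t \<in> {0..l j}"
        have "Ff k y j t = c * \<phi>0 j t" using c j t by blast
        also have "\<phi>0 j t = f j t / c0" using c0 j t c0nz by auto
        also have "f j t = Ff k v j t" using fv j t by blast
        finally show "Ff k y j t = Ff k (\<lambda>i. (c / c0) * v i) j t" using c0nz by (simp add: Ff_def field_simps)
      qed
      then show ?thesis using uniq_coef[OF k j] by blast
    qed
    have "\<forall>i<2*N. y i = (c / c0) * v i"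
    proof (intro allI impI)
      fix i assume i: "i < 2*N"
      show "y i = (c / c0) * v i"
      proof (cases "i < N")
        case True then show ?thesis using co by blast
      next
        case False
        then have "i = N + (i - N)" "i - N < N" using i by auto
        then show ?thesis using co by metis
      qed
    qed
    then show "\<exists>c. \<forall>i<2*N. y i = c * v i" by blast
  qed
  define p where "p = (if v 0 \<noteq> 0 then 0 else N)"
  have p: "p < 2*N" and vp: "v p \<noteq> 0" using vfull N0 unfolding p_def by auto
  define A where "A = {lam. simple_eigenvalue N src tgt l lam \<and>
           (\<exists>f. kirchhoff_eigenfunction N src tgt l lam f \<and> full_support N l f)}"
  have unb: "\<exists>s. s \<ge> T \<and> s^2 \<in> A" for T
    using stepC[OF k v vfull N0 uniq p vp, of T] unfolding A_def by blast
  show ?thesis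
  proof
    assume fin: "finite {lam. simple_eigenvalue N src tgt l lam \<and>
           (\<exists>f. kirchhoff_eigenfunction N src tgt l lam f \<and> full_support N l f)}"
    then have finA: "finite (insert 0 A)" unfolding A_def by simp
    obtain s where s: "s \<ge> max 1 (Max (insert 0 A) + 1)" and sA: "s^2 \<in> A" using unb by blast
    have "s^2 \<le> Max (insert 0 A)" using Max_ge[OF finA] sA by blast
    moreover have "s \<le> s^2" using s by (simp add: power2_eq_square)
    ultimately show False using s by linarith
  qed
qed

end
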